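(* Let $A$ be a finite skew brace, $k$ a field, $I$ an ideal of $A$, and $(V,\beta,\rho)$ an irreducible representation of $A$ over $k$. Then the restriction $(V,\beta|_I,\rho|_I)$, a representation of the skew brace $I$, is completely reducible. Write $V=W_1\oplus\cdots\oplus W_r$, where $S_1,\dots,S_r$ are pairwise non-equivalent irreducible representations of $I$ and $W_i$ (the homogeneous component of type $S_i$) is the sum of all irreducible $I$-subrepresentations of $V$ equivalent to $S_i$, with $W_i\cong S_i^{\oplus m_i}$. Then: (a) for each $g\in\Lambda_A$, $\varphi_{(\beta,\rho)}(g)$ maps each $W_i$ onto some $W_j$, and the resulting action of $\Lambda_A$ on $\{W_1,\dots,W_r\}$ is transitive; (b) $m_1=\cdots=m_r$ and $\dim_k S_1=\cdots=\dim_k S_r$.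
   Context: A skew brace is a set $A$ with two group operations $\cdot$ and $\circ$ such that $a\circ(b\cdot c)=(a\circ b)\cdot a^{-1}\cdot(a\circ c)$ for all $a,b,c\in A$; here $a^{-1}$ is the inverse in $(A,\cdot)$. For $a\in A$ let $\lambda_a(b)=a^{-1}\cdot(a\circ b)$ and $\lambda^{\mathrm{op}}_a(b)=(a\circ b)\cdot a^{-1}$. Let $\Lambda_A$ be the group on $A\times A$ with multiplication $(a,b)(c,d)=(a\cdot\lambda^{\mathrm{op}}_b(c),\,b\circ d)$. A representation of $A$ over $k$ is a triple $(V,\beta,\rho)$ with $V$ a $k$-vector space, $\beta:(A,\cdot)\to\mathrm{GL}(V)$, $\rho:(A,\circ)\to\mathrm{GL}(V)$ group homomorphisms such that $\beta(\lambda^{\mathrm{op}}_a(b))=\rho(a)\beta(b)\rho(a)^{-1}$ for all $a,b\in A$; it gives $\varphi_{(\beta,\rho)}:\Lambda_A\to\mathrm{GL}(V)$, $(a,b)\mapsto\beta(a)\rho(b)$. A subrepresentation is a subspace invariant under all $\beta(a),\rho(b)$; irreducible means $V\neq0$ with no subrepresentations other than $0,V$; completely reducible means a direct sum of irreducible subrepresentations. Two representations $(V_1,\beta_1,\rho_1),(V_2,\beta_2,\rho_2)$ are equivalent if there is a linear isomorphism $T:V_1\to V_2$ with $T\beta_1(a)=\beta_2(a)T$ and $T\rho_1(a)=\rho_2(a)T$ for all $a$. An ideal of $A$ is a subset $I$ that is a normal subgroup of both $(A,\cdot)$ and $(A,\circ)$ with $\lambda_a(I)\subseteq I$ for all $a\in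 A$; then $(I,\cdot,\circ)$ is a skew brace. *)

theory Defs
  imports Complex_Main "HOL-Algebra.Coset"
begin

definition skew_brace :: "'a monoid \<Rightarrow> 'a monoid \<Rightarrow> bool" where
  "skew_brace G C \<longleftrightarrow> group G \<and> group C \<and> carrier C = carrier G \<and>
     (\<forall>a\<in>carrier G. \<forall>b\<in>carrier G. \<forall>c\<in>carrier G.
        a \<otimes>\<^bsub>C\<^esub> (b \<otimes>\<^bsub>G\<^esub> c)
        = (a \<otimes>\<^bsub>C\<^esub> b) \<otimes>\<^bsub>G\<^esub> inv\<^bsub>G\<^esub> a \<otimes>\<^bsub>G\<^esub> (a \<otimes>\<^bsub>C\<^esub> c))"

definition brace_lambda :: "'a monoid \<Rightarrow> 'a monoid \<Rightarrow> 'a \<Rightarrow> 'a \<Rightarrow> 'a" where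
  "brace_lambda G C a b = inv\<^bsub>G\<^esub> a \<otimes>\<^bsub>G\<^esub> (a \<otimes>\<^bsub>C\<^esub> b)"

definition brace_lambda_op :: "'a monoid \<Rightarrow> 'a monoid \<Rightarrow> 'a \<Rightarrow> 'a \<Rightarrow> 'a" where
  "brace_lambda_op G C a b = (a \<otimes>\<^bsub>C\<^esub> b) \<otimes>\<^bsub>G\<^esub> inv\<^bsub>G\<^esub> a"

definition Lambda_group :: "'a monoid \<Rightarrow> 'a monoid \<Rightarrow> ('a \<times> 'a) monoid" where
  "Lambda_group G C = \<lparr> carrier = carrier G \<times> carrier G,
     mult = (\<lambda>(a,b) (c,d). (a \<otimes>\<^bsub>G\<^esub> brace_lambda_op G C b c, b \<otimes>\<^bsub>C\<^esub> d)),
     one = (\<one>\<^bsub>G\<^esub>, \<one>\<^bsub>C\<^esub>) \<rparr>"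

definition brace_ideal :: "'a monoid \<Rightarrow> 'a monoid \<Rightarrow> 'a set \<Rightarrow> bool" where
  "brace_ideal G C I \<longleftrightarrow> normal I G \<and> normal I C \<and>
     (\<forall>a\<in>carrier G. brace_lambda G C a ` I \<subseteq> I)"

text \<open>Representations on the k-vector space given by the whole type 'v with scalar
  multiplication scale.  beta, rho map into GL(V) (linear bijections).\<close>

definition brace_rep :: "'a monoid \<Rightarrow> 'a monoid \<Rightarrow> ('k::field \<Rightarrow> 'v::ab_group_add \<Rightarrow> 'v)
    \<Rightarrow> ('a \<Rightarrow> 'v \<Rightarrow> 'v) \<Rightarrow> ('a \<Rightarrow> 'v \<Rightarrow> 'v) \<Rightarrow> bool" where
  "brace_rep G C scale \<beta> \<rho> \<longleftrightarrow>
     (\<forall>a\<in>carrier G. Vector_Spaces.linear scale scale (\<beta> a) \<and> bij (\<beta> a) \<and>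
                    Vector_Spaces.linear scale scale (\<rho> a) \<and> bij (\<rho> a)) \<and>
     (\<forall>a\<in>carrier G. \<forall>b\<in>carrier G.
        \<beta> (a \<otimes>\<^bsub>G\<^esub> b) = \<beta> a \<circ> \<beta> b \<and>
        \<rho> (a \<otimes>\<^bsub>C\<^esub> b) = \<rho> a \<circ> \<rho> b \<and>
        \<beta> (brace_lambda_op G C a b) = \<rho> a \<circ> \<beta> b \<circ> inv_into UNIV (\<rho> a))"

definition rep_phi :: "('a \<Rightarrow> 'v \<Rightarrow> 'v) \<Rightarrow> ('a \<Rightarrow> 'v \<Rightarrow> 'v) \<Rightarrow> 'a \<times> 'a \<Rightarrow> 'v \<Rightarrow> 'v" where
  "rep_phi \<beta> \<rho> g = \<beta> (fst g) \<circ> \<rho> (snd g)"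

definition inv_subspace :: "('k::field \<Rightarrow> 'v::ab_group_add \<Rightarrow> 'v) \<Rightarrow> 'a set
    \<Rightarrow> ('a \<Rightarrow> 'v \<Rightarrow> 'v) \<Rightarrow> ('a \<Rightarrow> 'v \<Rightarrow> 'v) \<Rightarrow> 'v set \<Rightarrow> bool" where
  "inv_subspace scale X \<beta> \<rho> W \<longleftrightarrow> module.subspace scale W \<and>
     (\<forall>a\<in>X. \<beta> a ` W \<subseteq> W \<and> \<rho> a ` W \<subseteq> W)"

definition irred_sub :: "('k::field \<Rightarrow> 'v::ab_group_add \<Rightarrow> 'v) \<Rightarrow> 'a set
    \<Rightarrow> ('a \<Rightarrow> 'v \<Rightarrow> 'v) \<Rightarrow> ('a \<Rightarrow> 'v \<Rightarrow> 'v) \<Rightarrow> 'v set \<Rightarrow> bool" where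
  "irred_sub scale X \<beta> \<rho> W \<longleftrightarrow> inv_subspace scale X \<beta> \<rho> W \<and> W \<noteq> {0} \<and>
     (\<forall>U. inv_subspace scale X \<beta> \<rho> U \<and> U \<subseteq> W \<longrightarrow> U = {0} \<or> U = W)"

definition equiv_sub :: "('k::field \<Rightarrow> 'v::ab_group_add \<Rightarrow> 'v) \<Rightarrow> 'a set
    \<Rightarrow> ('a \<Rightarrow> 'v \<Rightarrow> 'v) \<Rightarrow> ('a \<Rightarrow> 'v \<Rightarrow> 'v) \<Rightarrow> 'v set \<Rightarrow> 'v set \<Rightarrow> bool" where
  "equiv_sub scale X \<beta> \<rho> W1 W2 \<longleftrightarrow> (\<exists>T.
     (\<forall>x\<in>W1. \<forall>y\<in>W1. T (x + y) = T x + T y) \<and>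
     (\<forall>c. \<forall>x\<in>W1. T (scale c x) = scale c (T x)) \<and>
     bij_betw T W1 W2 \<and>
     (\<forall>a\<in>X. \<forall>w\<in>W1. T (\<beta> a w) = \<beta> a (T w) \<and> T (\<rho> a w) = \<rho> a (T w)))"

definition direct_sum :: "('k::field \<Rightarrow> 'v::ab_group_add \<Rightarrow> 'v) \<Rightarrow> (nat \<Rightarrow> 'v set) \<Rightarrow> nat
    \<Rightarrow> 'v set \<Rightarrow> bool" where
  "direct_sum scale U n W \<longleftrightarrow> (\<forall>j<n. module.subspace scale (U j)) \<and>
     (\<forall>u. (\<forall>j<n. u j \<in> U j) \<and> (\<Sum>j<n. u j) = 0 \<longrightarrow> (\<forall>j<n. u j = 0)) \<and>
     W = {(\<Sum>j<n. u j) | u. \<forall>j<n. u j \<in> U j}"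

definition completely_reducible :: "('k::field \<Rightarrow> 'v::ab_group_add \<Rightarrow> 'v) \<Rightarrow> 'a set
    \<Rightarrow> ('a \<Rightarrow> 'v \<Rightarrow> 'v) \<Rightarrow> ('a \<Rightarrow> 'v \<Rightarrow> 'v) \<Rightarrow> bool" where
  "completely_reducible scale X \<beta> \<rho> \<longleftrightarrow>
     (\<exists>n U. (\<forall>j<n. irred_sub scale X \<beta> \<rho> (U j)) \<and> direct_sum scale U n UNIV)"

definition homog_comp :: "('k::field \<Rightarrow> 'v::ab_group_add \<Rightarrow> 'v) \<Rightarrow> 'a set
    \<Rightarrow> ('a \<Rightarrow> 'v \<Rightarrow> 'v) \<Rightarrow> ('a \<Rightarrow> 'v \<Rightarrow> 'v) \<Rightarrow> 'v set \<Rightarrow> 'v set" where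
  "homog_comp scale X \<beta> \<rho> S = module.span scale
     (\<Union>{W. irred_sub scale X \<beta> \<rho> W \<and> equiv_sub scale X \<beta> \<rho> W S})"

end

theory Submission
  imports Defs
begin


locale cl = finite_dimensional_vector_space scale Bas
  for scale :: "'k::field \<Rightarrow> 'v::ab_group_add \<Rightarrow> 'v" and Bas +
  fixes Ops :: "('v \<Rightarrow> 'v) set" and Phi :: "('v \<Rightarrow> 'v) set"
  assumes ops_lin: "x \<in> Ops \<Longrightarrow> Vector_Spaces.linear scale scale x"
  and phi_lin: "f \<in> Phi \<Longrightarrow> Vector_Spaces.linear scale scale f"
  and phi_fin: "finite Phi"
  and phi_id: "id \<in> Phi"
  and phi_comp: "f \<in> Phi \<Longrightarrow> g \<in> Phi \<Longrightarrow> f \<circ> g \<in> Phi"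
  and phi_inv: "f \<in> Phi \<Longrightarrow> \<exists>h\<in>Phi. f \<circ> h = id \<and> h \<circ> f = id"
  and conj: "f \<in> Phi \<Longrightarrow> x \<in> Ops \<Longrightarrow> \<exists>y\<in>Ops. \<exists>z\<in>Ops. x \<circ> f = f \<circ> y \<circ> z"
  and irrV: "subspace W \<Longrightarrow> (\<forall>f\<in>Phi. f ` W \<subseteq> W) \<Longrightarrow> W = {0} \<or> W = UNIV"
  and nontriv: "UNIV \<noteq> {0::'v}"
begin

definition "invs W \<longleftrightarrow> subspace W \<and> (\<forall>x\<in>Ops. x ` W \<subseteq> W)"
definition "irr W \<longleftrightarrow> invs W \<and> W \<noteq> {0} \<and> (\<forall>U. invs U \<and> U \<subseteq> W \<longrightarrow> U = {0} \<or> U = W)"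
definition "equ W1 W2 \<longleftrightarrow> (\<exists>T.
     (\<forall>x\<in>W1. \<forall>y\<in>W1. T (x + y) = T x + T y) \<and>
     (\<forall>c. \<forall>x\<in>W1. T (scale c x) = scale c (T x)) \<and>
     bij_betw T W1 W2 \<and> (\<forall>x\<in>Ops. \<forall>w\<in>W1. T (x w) = x (T w)))"
definition "homog S = span (\<Union>{W. irr W \<and> equ W S})"
definition "indep U J \<longleftrightarrow> (\<forall>u. (\<forall>j\<in>J. u j \<in> U j) \<and> (\<Sum>j\<in>J. u j) = 0 \<longrightarrow> (\<forall>j\<in>J. u j = 0))"
definition "sumset U J = {(\<Sum>j\<in>J. u j) | u. \<forall>j\<in>J. u j \<in> U j}"

sublocale vsp: vector_space_pair scale scale ..

lemma lin_add: "Vector_Spaces.linear scale scale f \<Longrightarrow> f (a + b) = f a + f b"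
  by (rule vsp.linear_add)
lemma lin_scale: "Vector_Spaces.linear scale scale f \<Longrightarrow> f (scale c a) = scale c (f a)"
  by (rule vsp.linear_scale)
lemma lin_0: "Vector_Spaces.linear scale scale f \<Longrightarrow> f 0 = 0"
  by (rule vsp.linear_0)
lemma lin_sum: "Vector_Spaces.linear scale scale f \<Longrightarrow> f (sum g J) = (\<Sum>j\<in>J. f (g j))"
  by (rule vsp.linear_sum)

lemma sumset_sub:
  assumes "\<forall>j\<in>J. subspace (U j)" "finite J"
  shows "sumset U J = span (\<Union>j\<in>J. U j)"
proof
  show "sumset U J \<subseteq> span (\<Union>j\<in>J. U j)"
  proof
    fix x assume "x \<in> sumset U J"
    then obtain u where "x = (\<Sum>j\<in>J. u j)" "\<forall>j\<in>J. u j \<in> U j" unfolding sumset_def by auto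
    then show "x \<in> span (\<Union>j\<in>J. U j)" by (simp, intro span_sum, auto intro: span_base)
  qed
next
  have sub: "subspace (sumset U J)"
    unfolding subspace_def sumset_def
  proof (intro conjI allI impI ballI)
    show "0 \<in> {\<Sum>j\<in>J. u j |u. \<forall>j\<in>J. u j \<in> U j}"
      using assms(1) by (auto intro!: exI[of _ "\<lambda>_. 0"] simp: subspace_0)
  next
    fix x y assume "x \<in> {\<Sum>j\<in>J. u j |u. \<forall>j\<in>J. u j \<in> U j}" "y \<in> {\<Sum>j\<in>J. u j |u. \<forall>j\<in>J. u j \<in> U j}"
    then obtain u v where "x = (\<Sum>j\<in>J. u j)" "\<forall>j\<in>J. u j \<in> U j" "y = (\<Sum>j\<in>J. v j)" "\<forall>j\<in>J. v j \<in> U j" by auto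
    then show "x + y \<in> {\<Sum>j\<in>J. u j |u. \<forall>j\<in>J. u j \<in> U j}"
      using assms(1) by (auto intro!: exI[of _ "\<lambda>j. u j + v j"] simp: sum.distrib subspace_add)
  next
    fix c x assume "x \<in> {\<Sum>j\<in>J. u j |u. \<forall>j\<in>J. u j \<in> U j}"
    then obtain u where "x = (\<Sum>j\<in>J. u j)" "\<forall>j\<in>J. u j \<in> U j" by auto
    then show "scale c x \<in> {\<Sum>j\<in>J. u j |u. \<forall>j\<in>J. u j \<in> U j}"
      using assms(1) by (auto intro!: exI[of _ "\<lambda>j. scale c (u j)"] simp: scale_sum_right subspace_scale)
  qed
  have "(\<Union>j\<in>J. U j) \<subseteq> sumset U J"
  proof
    fix x assume "x \<in> (\<Union>j\<in>J. U j)"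
    then obtain k where k: "k \<in> J" "x \<in> U k" by auto
    let ?u = "\<lambda>j. if j = k then x else 0"
    have "(\<Sum>j\<in>J. ?u j) = x" using k assms(2) by (simp add: sum.delta)
    moreover have "\<forall>j\<in>J. ?u j \<in> U j" using k assms(1) by (auto simp: subspace_0)
    ultimately show "x \<in> sumset U J" unfolding sumset_def by (intro CollectI exI[of _ ?u]) simp
  qed
  then show "span (\<Union>j\<in>J. U j) \<subseteq> sumset U J"
    using sub by (simp add: span_minimal)
qed

definition "dec U J v = (SOME u. (\<forall>j\<in>J. u j \<in> U j) \<and> v = (\<Sum>j\<in>J. u j))"

lemma dec_unique:
  assumes ind: "indep U J" and sub: "\<forall>j\<in>J. subspace (U j)"
    and u: "\<forall>j\<in>J. u j \<in> U j" and v: "v = (\<Sum>j\<in>J. u j)" and k: "k \<in> J"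
  shows "dec U J v k = u k"
proof -
  have ex: "\<exists>u. (\<forall>j\<in>J. u j \<in> U j) \<and> v = (\<Sum>j\<in>J. u j)" using u v by blast
  define d where "d = dec U J v"
  have d: "(\<forall>j\<in>J. d j \<in> U j) \<and> v = (\<Sum>j\<in>J. d j)"
    unfolding d_def dec_def by (rule someI_ex[OF ex])
  have "\<forall>j\<in>J. d j - u j \<in> U j" using d u sub by (simp add: subspace_diff)
  moreover have "(\<Sum>j\<in>J. d j - u j) = 0" using d v by (simp add: sum_subtractf)
  ultimately have "\<forall>j\<in>J. d j - u j = 0" using ind unfolding indep_def by (metis (no_types, lifting))
  then show ?thesis using k d_def by simp
qed

lemma dec_exists:
  assumes "v \<in> sumset U J"
  shows "(\<forall>j\<in>J. dec U J v j \<in> U j) \<and> v = (\<Sum>j\<in>J. dec U J v j)"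
proof -
  have ex: "\<exists>u. (\<forall>j\<in>J. u j \<in> U j) \<and> v = (\<Sum>j\<in>J. u j)" using assms unfolding sumset_def by blast
  show ?thesis unfolding dec_def by (rule someI_ex[OF ex])
qed

lemma dec_add:
  assumes ind: "indep U J" and sub: "\<forall>j\<in>J. subspace (U j)"
    and a: "a \<in> sumset U J" and b: "b \<in> sumset U J" and k: "k \<in> J"
  shows "dec U J (a + b) k = dec U J a k + dec U J b k"
proof -
  have da: "(\<forall>j\<in>J. dec U J a j \<in> U j) \<and> a = (\<Sum>j\<in>J. dec U J a j)" by (rule dec_exists[OF a])
  have db: "(\<forall>j\<in>J. dec U J b j \<in> U j) \<and> b = (\<Sum>j\<in>J. dec U J b j)" by (rule dec_exists[OF b])
  show ?thesis
    by (rule dec_unique[OF ind sub _ _ k]) (use da db sub in \<open>auto simp: subspace_add sum.distrib\<close>)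
qed

lemma dec_scale:
  assumes ind: "indep U J" and sub: "\<forall>j\<in>J. subspace (U j)"
    and a: "a \<in> sumset U J" and k: "k \<in> J"
  shows "dec U J (scale c a) k = scale c (dec U J a k)"
proof -
  have da: "(\<forall>j\<in>J. dec U J a j \<in> U j) \<and> a = (\<Sum>j\<in>J. dec U J a j)" by (rule dec_exists[OF a])
  show ?thesis
  proof (rule dec_unique[OF ind sub _ _ k])
    show "\<forall>j\<in>J. scale c (dec U J a j) \<in> U j" using da sub by (auto simp: subspace_scale)
    show "scale c a = (\<Sum>j\<in>J. scale c (dec U J a j))" using da by (metis scale_sum_right)
  qed
qed

lemma dec_ops:
  assumes ind: "indep U J" and sub: "\<forall>j\<in>J. invs (U j)"
    and a: "a \<in> sumset U J" and k: "k \<in> J" and x: "x \<in> Ops"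
  shows "dec U J (x a) k = x (dec U J a k)"
proof -
  have da: "(\<forall>j\<in>J. dec U J a j \<in> U j) \<and> a = (\<Sum>j\<in>J. dec U J a j)" by (rule dec_exists[OF a])
  have sub': "\<forall>j\<in>J. subspace (U j)" using sub invs_def by blast
  have "x a = (\<Sum>j\<in>J. x (dec U J a j))" using da lin_sum[OF ops_lin[OF x]] by metis
  moreover have "\<forall>j\<in>J. x (dec U J a j) \<in> U j" using da sub x unfolding invs_def by blast
  ultimately show ?thesis
    by (intro dec_unique[OF ind sub' _ _ k]) auto
qed

lemma sumset_dec_zero:
  assumes "v \<in> sumset U J" "\<forall>k\<in>J. dec U J v k = 0"
  shows "v = 0"
  using dec_exists[OF assms(1)] assms(2) by simp

lemma dim_le_map:
  assumes W1: "subspace W1"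
    and add: "\<forall>x\<in>W1. \<forall>y\<in>W1. T (x + y) = T x + T y"
    and sc: "\<forall>c. \<forall>x\<in>W1. T (scale c x) = scale c (T x)"
    and W2: "W2 \<subseteq> T ` W1"
  shows "dim W2 \<le> dim W1"
proof -
  obtain B where B: "B \<subseteq> W1" "independent B" "W1 \<subseteq> span B" "card B = dim W1"
    using basis_exists[of W1] by metis
  have fB: "finite B" using B(2) finiteI_independent by blast
  define S' where "S' = {x\<in>W1. T x \<in> span (T ` B)}"
  have T0: "T 0 = 0"
  proof -
    have "T (0 + 0) = T 0 + T 0" using add W1 subspace_0 by blast
    then show ?thesis by simp
  qed
  have "subspace S'"
    unfolding subspace_def S'_def
  proof (intro conjI allI ballI)
    show "0 \<in> {x \<in> W1. T x \<in> span (T ` B)}" using W1 T0 by (simp add: subspace_0 span_0)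
  next
    fix x y assume x: "x \<in> {x \<in> W1. T x \<in> span (T ` B)}" and y: "y \<in> {x \<in> W1. T x \<in> span (T ` B)}"
    then have "T (x + y) = T x + T y" using add by simp
    then show "x + y \<in> {x \<in> W1. T x \<in> span (T ` B)}" using x y W1 by (simp add: subspace_add span_add)
  next
    fix c x assume x: "x \<in> {x \<in> W1. T x \<in> span (T ` B)}"
    then have "T (scale c x) = scale c (T x)" using sc by simp
    then show "scale c x \<in> {x \<in> W1. T x \<in> span (T ` B)}" using x W1 by (simp add: subspace_scale span_scale)
  qed
  moreover have "B \<subseteq> S'" using B(1) unfolding S'_def by (auto intro: span_base)
  ultimately have "span B \<subseteq> S'" by (simp add: span_minimal)
  then have "W1 \<subseteq> S'" using B(3) by blast
  then have "W2 \<subseteq> span (T ` B)" using W2 unfolding S'_def by blast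
  then have "dim W2 \<le> card (T ` B)" using fB by (simp add: dim_le_card)
  also have "\<dots> \<le> card B" using fB by (rule card_image_le)
  finally show ?thesis using B(4) by simp
qed

lemma dim_eq_map:
  assumes W1: "subspace W1"
    and add: "\<forall>x\<in>W1. \<forall>y\<in>W1. T (x + y) = T x + T y"
    and sc: "\<forall>c. \<forall>x\<in>W1. T (scale c x) = scale c (T x)"
    and bij: "bij_betw T W1 W2"
  shows "dim W2 = dim W1"
proof -
  have im: "T ` W1 = W2" using bij by (simp add: bij_betw_def)
  have W2s: "subspace W2" unfolding subspace_def
  proof (intro conjI allI ballI)
    have "T (0 + 0) = T 0 + T 0" using add W1 subspace_0 by blast
    then have "T 0 = 0" by simp
    moreover have "T 0 \<in> W2" using im W1 subspace_0 by blast
    ultimately show "0 \<in> W2" by simp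
  next
    fix x y assume "x \<in> W2" "y \<in> W2"
    then obtain a b where ab: "a \<in> W1" "b \<in> W1" "x = T a" "y = T b" using im by blast
    then have "x + y = T (a + b)" using add by simp
    moreover have "a + b \<in> W1" using ab W1 subspace_add by blast
    ultimately show "x + y \<in> W2" using im by blast
  next
    fix c x assume "x \<in> W2"
    then obtain a where ab: "a \<in> W1" "x = T a" using im by blast
    then have "scale c x = T (scale c a)" using sc by simp
    moreover have "scale c a \<in> W1" using ab W1 subspace_scale by blast
    ultimately show "scale c x \<in> W2" using im by blast
  qed
  let ?S = "inv_into W1 T"
  have bi: "bij_betw ?S W2 W1" using bij by (rule bij_betw_inv_into)
  have inj: "inj_on T W1" by (rule bij_betw_imp_inj_on[OF bij])
  have add2: "\<forall>x\<in>W2. \<forall>y\<in>W2. ?S (x + y) = ?S x + ?S y"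
  proof (intro ballI)
    fix x y assume xy: "x \<in> W2" "y \<in> W2"
    have a: "?S x \<in> W1" "?S y \<in> W1" "T (?S x) = x" "T (?S y) = y"
      using bij_betw_apply[OF bi xy(1)] bij_betw_apply[OF bi xy(2)]
        bij_betw_inv_into_right[OF bij xy(1)] bij_betw_inv_into_right[OF bij xy(2)] by auto
    then have e: "T (?S x + ?S y) = x + y" using add by simp
    have "?S x + ?S y \<in> W1" using a W1 subspace_add by blast
    from inv_into_f_f[OF inj this] show "?S (x + y) = ?S x + ?S y" unfolding e .
  qed
  have sc2: "\<forall>c. \<forall>x\<in>W2. ?S (scale c x) = scale c (?S x)"
  proof (intro allI ballI)
    fix c x assume xy: "x \<in> W2"
    have a: "?S x \<in> W1" "T (?S x) = x"
      using bij_betw_apply[OF bi xy] bij_betw_inv_into_right[OF bij xy] by auto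
    then have e: "T (scale c (?S x)) = scale c x" using sc by simp
    have "scale c (?S x) \<in> W1" using a W1 subspace_scale by blast
    from inv_into_f_f[OF inj this] show "?S (scale c x) = scale c (?S x)" unfolding e .
  qed
  have "dim W2 \<le> dim W1"
    using dim_le_map[OF W1 add sc] bij_betw_imp_surj_on[OF bij] by blast
  moreover have "dim W1 \<le> dim W2"
    using dim_le_map[OF W2s add2 sc2] bij_betw_imp_surj_on[OF bi] by blast
  ultimately show ?thesis by simp
qed

lemma equ_sym:
  assumes W1: "invs W1" and e: "equ W1 W2"
  shows "equ W2 W1"
proof -
  obtain T where add: "\<forall>x\<in>W1. \<forall>y\<in>W1. T (x + y) = T x + T y"
    and sc: "\<forall>c. \<forall>x\<in>W1. T (scale c x) = scale c (T x)"
    and bij: "bij_betw T W1 W2" and op: "\<forall>x\<in>Ops. \<forall>w\<in>W1. T (x w) = x (T w)"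
    using e unfolding equ_def by blast
  have W1s: "subspace W1" and W1i: "\<forall>x\<in>Ops. x ` W1 \<subseteq> W1" using W1 invs_def by auto
  let ?S = "inv_into W1 T"
  have bi: "bij_betw ?S W2 W1" using bij by (rule bij_betw_inv_into)
  have inj: "inj_on T W1" by (rule bij_betw_imp_inj_on[OF bij])
  have add2: "\<forall>x\<in>W2. \<forall>y\<in>W2. ?S (x + y) = ?S x + ?S y"
  proof (intro ballI)
    fix x y assume xy: "x \<in> W2" "y \<in> W2"
    have a: "?S x \<in> W1" "?S y \<in> W1" "T (?S x) = x" "T (?S y) = y"
      using bij_betw_apply[OF bi xy(1)] bij_betw_apply[OF bi xy(2)]
        bij_betw_inv_into_right[OF bij xy(1)] bij_betw_inv_into_right[OF bij xy(2)] by auto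
    then have e: "T (?S x + ?S y) = x + y" using add by simp
    have "?S x + ?S y \<in> W1" using a W1s subspace_add by blast
    from inv_into_f_f[OF inj this] show "?S (x + y) = ?S x + ?S y" unfolding e .
  qed
  have sc2: "\<forall>c. \<forall>x\<in>W2. ?S (scale c x) = scale c (?S x)"
  proof (intro allI ballI)
    fix c x assume xy: "x \<in> W2"
    have a: "?S x \<in> W1" "T (?S x) = x"
      using bij_betw_apply[OF bi xy] bij_betw_inv_into_right[OF bij xy] by auto
    then have e: "T (scale c (?S x)) = scale c x" using sc by simp
    have "scale c (?S x) \<in> W1" using a W1s subspace_scale by blast
    from inv_into_f_f[OF inj this] show "?S (scale c x) = scale c (?S x)" unfolding e .
  qed
  have op2: "\<forall>x\<in>Ops. \<forall>w\<in>W2. ?S (x w) = x (?S w)"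
  proof (intro ballI)
    fix x w assume x: "x \<in> Ops" and w: "w \<in> W2"
    have a: "?S w \<in> W1" "T (?S w) = w"
      using bij_betw_apply[OF bi w] bij_betw_inv_into_right[OF bij w] by auto
    have xa: "x (?S w) \<in> W1" using W1i x a(1) by blast
    have e: "T (x (?S w)) = x w" using op x a by simp
    from inv_into_f_f[OF inj xa] show "?S (x w) = x (?S w)" unfolding e .
  qed
  show ?thesis unfolding equ_def using add2 sc2 bi op2 by (intro exI[of _ ?S] conjI)
qed

lemma equ_trans:
  assumes e1: "equ W1 W2" and e2: "equ W2 W3"
  shows "equ W1 W3"
proof -
  obtain T where add: "\<forall>x\<in>W1. \<forall>y\<in>W1. T (x + y) = T x + T y"
    and sc: "\<forall>c. \<forall>x\<in>W1. T (scale c x) = scale c (T x)"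
    and bij: "bij_betw T W1 W2" and op: "\<forall>x\<in>Ops. \<forall>w\<in>W1. T (x w) = x (T w)"
    by (insert e1[unfolded equ_def], elim exE conjE, rule that, assumption+)
  obtain T' where add': "\<forall>x\<in>W2. \<forall>y\<in>W2. T' (x + y) = T' x + T' y"
    and sc': "\<forall>c. \<forall>x\<in>W2. T' (scale c x) = scale c (T' x)"
    and bij': "bij_betw T' W2 W3" and op': "\<forall>x\<in>Ops. \<forall>w\<in>W2. T' (x w) = x (T' w)"
    by (insert e2[unfolded equ_def], elim exE conjE, rule that, assumption+)
  have m: "\<And>x. x \<in> W1 \<Longrightarrow> T x \<in> W2" by (rule bij_betw_apply[OF bij])
  have "(\<forall>x\<in>W1. \<forall>y\<in>W1. (T' \<circ> T) (x + y) = (T' \<circ> T) x + (T' \<circ> T) y)"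
  proof (intro ballI)
    fix x y assume x: "x \<in> W1" and y: "y \<in> W1"
    have "T (x + y) = T x + T y" using add x y by blast
    moreover have "T' (T x + T y) = T' (T x) + T' (T y)" using add' m x y by blast
    ultimately show "(T' \<circ> T) (x + y) = (T' \<circ> T) x + (T' \<circ> T) y" by simp
  qed
  moreover have "(\<forall>c. \<forall>x\<in>W1. (T' \<circ> T) (scale c x) = scale c ((T' \<circ> T) x))"
  proof (intro allI ballI)
    fix c x assume x: "x \<in> W1"
    have "T (scale c x) = scale c (T x)" using sc x by blast
    moreover have "T' (scale c (T x)) = scale c (T' (T x))" using sc' m x by blast
    ultimately show "(T' \<circ> T) (scale c x) = scale c ((T' \<circ> T) x)" by simp
  qed
  moreover have "bij_betw (T' \<circ> T) W1 W3" using bij bij' by (rule bij_betw_trans)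
  moreover have "\<forall>x\<in>Ops. \<forall>w\<in>W1. (T' \<circ> T) (x w) = x ((T' \<circ> T) w)"
  proof (intro ballI)
    fix x w assume x: "x \<in> Ops" and w: "w \<in> W1"
    have "T (x w) = x (T w)" using op x w by blast
    moreover have "T' (x (T w)) = x (T' (T w))" using op' m x w by blast
    ultimately show "(T' \<circ> T) (x w) = x ((T' \<circ> T) w)" by simp
  qed
  ultimately show ?thesis unfolding equ_def by (intro exI[of _ "T' \<circ> T"] conjI)
qed

lemma irr_sub: "irr W \<Longrightarrow> subspace W" unfolding irr_def invs_def by blast
lemma irr_invs: "irr W \<Longrightarrow> invs W" unfolding irr_def by blast

lemma schur:
  assumes ind: "indep U J" and UJ: "\<forall>j\<in>J. irr (U j)"
    and W: "irr W" and WS: "W \<subseteq> sumset U J" and k: "k \<in> J"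
    and w0: "w0 \<in> W" "dec U J w0 k \<noteq> 0"
  shows "equ W (U k)"
proof -
  have subU: "\<forall>j\<in>J. subspace (U j)" using UJ irr_sub by blast
  have invU: "\<forall>j\<in>J. invs (U j)" using UJ irr_invs by blast
  have Ws: "subspace W" using W irr_sub by blast
  have Wi: "\<forall>x\<in>Ops. x ` W \<subseteq> W" using W unfolding irr_def invs_def by blast
  let ?T = "\<lambda>v. dec U J v k"
  have add: "\<forall>x\<in>W. \<forall>y\<in>W. ?T (x + y) = ?T x + ?T y"
    using dec_add[OF ind subU _ _ k] WS by blast
  have sc: "\<forall>c. \<forall>x\<in>W. ?T (scale c x) = scale c (?T x)"
    using dec_scale[OF ind subU _ k] WS by blast
  have op: "\<forall>x\<in>Ops. \<forall>w\<in>W. ?T (x w) = x (?T w)"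
    using dec_ops[OF ind invU _ k] WS by blast
  have into: "\<forall>w\<in>W. ?T w \<in> U k"
    using dec_exists WS k by blast
  have T0: "?T 0 = 0"
  proof -
    have "?T (0 + 0) = ?T 0 + ?T 0" using add Ws subspace_0 by blast
    then show ?thesis by simp
  qed
  define K where "K = {w\<in>W. ?T w = 0}"
  have Kinv: "invs K"
    unfolding invs_def subspace_def K_def
  proof (intro conjI allI ballI)
    show "0 \<in> {w \<in> W. ?T w = 0}" using T0 Ws subspace_0 by blast
  next
    fix x y assume x: "x \<in> {w \<in> W. ?T w = 0}" and y: "y \<in> {w \<in> W. ?T w = 0}"
    then have "?T (x + y) = ?T x + ?T y" using add by simp
    then show "x + y \<in> {w \<in> W. ?T w = 0}" using x y Ws subspace_add by simp
  next
    fix c x assume x: "x \<in> {w \<in> W. ?T w = 0}"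
    then have "?T (scale c x) = scale c (?T x)" using sc by simp
    then show "scale c x \<in> {w \<in> W. ?T w = 0}" using x Ws subspace_scale by simp
  next
    fix x assume x: "x \<in> Ops"
    show "x ` {w \<in> W. ?T w = 0} \<subseteq> {w \<in> W. ?T w = 0}"
    proof
      fix v assume "v \<in> x ` {w \<in> W. ?T w = 0}"
      then obtain w where w: "w \<in> W" "?T w = 0" "v = x w" by blast
      have "?T (x w) = x 0" using op x w by simp
      also have "\<dots> = 0" using lin_0[OF ops_lin[OF x]] .
      finally show "v \<in> {w \<in> W. ?T w = 0}" using w Wi x by blast
    qed
  qed
  have "K \<subseteq> W" unfolding K_def by blast
  then have "K = {0} \<or> K = W" using W Kinv unfolding irr_def by blast
  moreover have "K \<noteq> W" using w0 unfolding K_def by blast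
  ultimately have K0: "K = {0}" by blast
  have inj: "inj_on ?T W"
  proof (rule inj_onI)
    fix a b assume a: "a \<in> W" and b: "b \<in> W" and e: "?T a = ?T b"
    have ab: "a - b \<in> W" using a b Ws subspace_diff by blast
    have "?T (a - b + b) = ?T (a - b) + ?T b" using add ab b by blast
    then have "?T (a - b) = 0" using e by simp
    then have "a - b \<in> K" using ab K_def by blast
    then show "a = b" using K0 by simp
  qed
  define Im where "Im = ?T ` W"
  have Iminv: "invs Im"
    unfolding invs_def subspace_def Im_def
  proof (intro conjI allI ballI)
    show "0 \<in> ?T ` W" using T0 Ws subspace_0 by (metis image_eqI)
  next
    fix x y assume x: "x \<in> ?T ` W" and y: "y \<in> ?T ` W"
    then obtain a b where ab: "a \<in> W" "b \<in> W" "x = ?T a" "y = ?T b" by blast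
    then have "x + y = ?T (a + b)" using add by simp
    moreover have "a + b \<in> W" using ab Ws subspace_add by blast
    ultimately show "x + y \<in> ?T ` W" by blast
  next
    fix c x assume x: "x \<in> ?T ` W"
    then obtain a where ab: "a \<in> W" "x = ?T a" by blast
    then have "scale c x = ?T (scale c a)" using sc by simp
    moreover have "scale c a \<in> W" using ab Ws subspace_scale by blast
    ultimately show "scale c x \<in> ?T ` W" by blast
  next
    fix x assume x: "x \<in> Ops"
    show "x ` (?T ` W) \<subseteq> ?T ` W"
    proof
      fix v assume "v \<in> x ` (?T ` W)"
      then obtain w where w: "w \<in> W" "v = x (?T w)" by blast
      then have "v = ?T (x w)" using op x by simp
      moreover have "x w \<in> W" using w Wi x by blast
      ultimately show "v \<in> ?T ` W" by blast
    qed
  qed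
  have "Im \<subseteq> U k" using into Im_def by blast
  then have "Im = {0} \<or> Im = U k" using UJ k Iminv unfolding irr_def by blast
  moreover have "Im \<noteq> {0}" using w0 Im_def by blast
  ultimately have "Im = U k" by blast
  then have "bij_betw ?T W (U k)" using inj unfolding Im_def bij_betw_def by simp
  then show ?thesis unfolding equ_def using add sc op by (intro exI[of _ ?T] conjI)
qed

end


context cl begin

lemma invs_UNIV: "invs UNIV" unfolding invs_def by (simp add: subspace_UNIV)

lemma exists_irr: "\<exists>W. irr W"
proof -
  define D where "D = {dim W | W. invs W \<and> W \<noteq> {0}}"
  have "dim (UNIV::'v set) \<in> D" unfolding D_def using invs_UNIV nontriv by (intro CollectI exI[of _ UNIV]) simp
  define m where "m = Least (\<lambda>n. n \<in> D)"
  have "m \<in> D" unfolding m_def by (rule LeastI) fact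
  then obtain W where W: "invs W" "W \<noteq> {0}" "dim W = m" unfolding D_def by blast
  have "irr W" unfolding irr_def
  proof (intro conjI allI impI W(1,2))
    fix U assume U: "invs U \<and> U \<subseteq> W"
    show "U = {0} \<or> U = W"
    proof (cases "U = {0}")
      case False
      then have "dim U \<in> D" unfolding D_def using U by blast
      then have "dim W \<le> dim U" unfolding W(3) m_def by (rule Least_le)
      moreover have "subspace U" "subspace W" using U W(1) unfolding invs_def by auto
      ultimately have "U = W" using subspace_dim_equal[of U W] U by blast
      then show ?thesis by blast
    qed simp
  qed
  then show ?thesis by blast
qed

lemma phi_invs:
  assumes f: "f \<in> Phi" and W: "invs W"
  shows "invs (f ` W)"
  unfolding invs_def
proof (intro conjI ballI)
  show "subspace (f ` W)" using W vsp.linear_subspace_image[OF phi_lin[OF f]] unfolding invs_def by blast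
next
  fix x assume x: "x \<in> Ops"
  obtain y z where yz: "y \<in> Ops" "z \<in> Ops" "x \<circ> f = f \<circ> y \<circ> z" using conj[OF f x] by blast
  show "x ` f ` W \<subseteq> f ` W"
  proof
    fix v assume "v \<in> x ` f ` W"
    then obtain w where w: "w \<in> W" "v = x (f w)" by blast
    have "v = f (y (z w))" using w(2) fun_cong[OF yz(3), of w] by simp
    moreover have "y (z w) \<in> W" using W yz w unfolding invs_def by blast
    ultimately show "v \<in> f ` W" by blast
  qed
qed

lemma phi_irr:
  assumes f: "f \<in> Phi" and W: "irr W"
  shows "irr (f ` W)"
proof -
  obtain h where h: "h \<in> Phi" "f \<circ> h = id" "h \<circ> f = id" using phi_inv[OF f] by blast
  have hf: "\<And>v. h (f v) = v" using fun_cong[OF h(3)] by simp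
  have fh: "\<And>v. f (h v) = v" using fun_cong[OF h(2)] by simp
  have f0: "f 0 = 0" by (rule lin_0[OF phi_lin[OF f]])
  have h0: "h 0 = 0" by (rule lin_0[OF phi_lin[OF h(1)]])
  have Wi: "invs W" using W irr_def by blast
  show ?thesis unfolding irr_def
  proof (intro conjI allI impI)
    show "invs (f ` W)" by (rule phi_invs[OF f Wi])
    show "f ` W \<noteq> {0}"
    proof
      assume a: "f ` W = {0}"
      have "W \<noteq> {0}" "0 \<in> W" using W unfolding irr_def invs_def using subspace_0 by auto
      then obtain w where "w \<in> W" "w \<noteq> 0" by blast
      then have "f w = 0" using a by blast
      then have "h (f w) = 0" using h0 by simp
      then have "w = 0" using hf by simp
      with \<open>w \<noteq> 0\<close> show False by simp
    qed
  next
    fix U assume U: "invs U \<and> U \<subseteq> f ` W"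
    have "invs (h ` U)" using phi_invs[OF h(1)] U by blast
    moreover have "h ` U \<subseteq> W"
    proof
      fix v assume "v \<in> h ` U"
      then obtain u where "u \<in> U" "v = h u" by blast
      then obtain w where "w \<in> W" "u = f w" using U by blast
      then show "v \<in> W" using \<open>v = h u\<close> hf by simp
    qed
    ultimately have c: "h ` U = {0} \<or> h ` U = W" using W unfolding irr_def by blast
    have e: "f ` h ` U = U" using fh by (simp add: image_comp)
    show "U = {0} \<or> U = f ` W"
    proof (cases "h ` U = {0}")
      case True
      then have "f ` h ` U = {0}" using f0 by simp
      then show ?thesis using e by simp
    next
      case False
      then have "h ` U = W" using c by blast
      then show ?thesis using e by simp
    qed
  qed
qed

lemma phi_equ:
  assumes f: "f \<in> Phi" and W: "invs W" and e: "equ W S"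
  shows "equ (f ` W) (f ` S)"
proof -
  obtain h where h: "h \<in> Phi" "f \<circ> h = id" "h \<circ> f = id" using phi_inv[OF f] by blast
  have hf: "\<And>v. h (f v) = v" using fun_cong[OF h(3)] by simp
  have fh: "\<And>v. f (h v) = v" using fun_cong[OF h(2)] by simp
  have fl: "Vector_Spaces.linear scale scale f" by (rule phi_lin[OF f])
  obtain T where add: "\<forall>x\<in>W. \<forall>y\<in>W. T (x + y) = T x + T y"
    and sc: "\<forall>c. \<forall>x\<in>W. T (scale c x) = scale c (T x)"
    and bij: "bij_betw T W S" and op: "\<forall>x\<in>Ops. \<forall>w\<in>W. T (x w) = x (T w)"
    by (insert e[unfolded equ_def], elim exE conjE, rule that, assumption+)
  have Wi: "\<forall>x\<in>Ops. x ` W \<subseteq> W" using W invs_def by blast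
  let ?T = "f \<circ> T \<circ> h"
  have T'f: "\<And>w. ?T (f w) = f (T w)" using hf by simp
  have add': "\<forall>x\<in>f ` W. \<forall>y\<in>f ` W. ?T (x + y) = ?T x + ?T y"
  proof (intro ballI)
    fix x y assume "x \<in> f ` W" "y \<in> f ` W"
    then obtain a b where ab: "a \<in> W" "b \<in> W" "x = f a" "y = f b" by blast
    have "x + y = f (a + b)" using ab lin_add[OF fl] by simp
    then have "?T (x + y) = f (T (a + b))" using T'f by simp
    also have "\<dots> = f (T a + T b)" using add ab by simp
    also have "\<dots> = ?T x + ?T y" using ab T'f lin_add[OF fl] by simp
    finally show "?T (x + y) = ?T x + ?T y" .
  qed
  have sc': "\<forall>c. \<forall>x\<in>f ` W. ?T (scale c x) = scale c (?T x)"
  proof (intro allI ballI)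
    fix c x assume "x \<in> f ` W"
    then obtain a where ab: "a \<in> W" "x = f a" by blast
    have "scale c x = f (scale c a)" using ab lin_scale[OF fl] by simp
    then have "?T (scale c x) = f (T (scale c a))" using T'f by simp
    also have "\<dots> = f (scale c (T a))" using sc ab by simp
    also have "\<dots> = scale c (?T x)" using ab T'f lin_scale[OF fl] by simp
    finally show "?T (scale c x) = scale c (?T x)" .
  qed
  have b1: "bij_betw h (f ` W) W"
    by (rule bij_betw_byWitness[where f'=f]) (auto simp: hf fh)
  have b3: "bij_betw f S (f ` S)"
    by (rule bij_betw_byWitness[where f'=h]) (auto simp: hf fh)
  have bij': "bij_betw ?T (f ` W) (f ` S)"
    using bij_betw_trans[OF bij_betw_trans[OF b1 bij] b3] by (simp add: comp_assoc)
  have op': "\<forall>x\<in>Ops. \<forall>w\<in>f ` W. ?T (x w) = x (?T w)"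
  proof (intro ballI)
    fix x v assume x: "x \<in> Ops" and "v \<in> f ` W"
    then obtain w where w: "w \<in> W" "v = f w" by blast
    obtain y z where yz: "y \<in> Ops" "z \<in> Ops" "x \<circ> f = f \<circ> y \<circ> z" using conj[OF f x] by blast
    have xf: "\<And>u. x (f u) = f (y (z u))" using yz(3) by (simp add: fun_eq_iff)
    have zw: "z w \<in> W" using Wi yz(2) w(1) by blast
    have "?T (x v) = f (T (y (z w)))" using w(2) xf T'f by simp
    also have "\<dots> = f (y (T (z w)))" using op yz(1) zw by simp
    also have "\<dots> = f (y (z (T w)))" using op yz(2) w(1) by simp
    also have "\<dots> = x (?T v)" using w(2) xf T'f by simp
    finally show "?T (x v) = x (?T v)" .
  qed
  show ?thesis unfolding equ_def using add' sc' bij' op' by (intro exI[of _ ?T] conjI)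
qed

lemma homog_image:
  assumes f: "f \<in> Phi" and S: "irr S"
  shows "f ` homog S = homog (f ` S)"
proof -
  obtain h where h: "h \<in> Phi" "f \<circ> h = id" "h \<circ> f = id" using phi_inv[OF f] by blast
  have hf: "\<And>v. h (f v) = v" using fun_cong[OF h(3)] by simp
  have fh: "\<And>v. f (h v) = v" using fun_cong[OF h(2)] by simp
  have hfS: "h ` f ` S = S" using hf by (simp add: image_comp)
  have "f ` (\<Union>{W. irr W \<and> equ W S}) = \<Union>{W. irr W \<and> equ W (f ` S)}"
  proof
    show "f ` (\<Union>{W. irr W \<and> equ W S}) \<subseteq> \<Union>{W. irr W \<and> equ W (f ` S)}"
    proof
      fix v assume "v \<in> f ` (\<Union>{W. irr W \<and> equ W S})"
      then obtain W w where W: "irr W" "equ W S" "w \<in> W" "v = f w" by blast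
      have "irr (f ` W)" by (rule phi_irr[OF f W(1)])
      moreover have "equ (f ` W) (f ` S)" by (rule phi_equ[OF f irr_invs[OF W(1)] W(2)])
      moreover have "v \<in> f ` W" using W by blast
      ultimately show "v \<in> \<Union>{W. irr W \<and> equ W (f ` S)}" by blast
    qed
  next
    show "\<Union>{W. irr W \<and> equ W (f ` S)} \<subseteq> f ` (\<Union>{W. irr W \<and> equ W S})"
    proof
      fix v assume "v \<in> \<Union>{W. irr W \<and> equ W (f ` S)}"
      then obtain W where W: "irr W" "equ W (f ` S)" "v \<in> W" by blast
      have "irr (h ` W)" by (rule phi_irr[OF h(1) W(1)])
      moreover have "equ (h ` W) S" using phi_equ[OF h(1) irr_invs[OF W(1)] W(2)] hfS by simp
      moreover have "h v \<in> h ` W" using W by blast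
      ultimately have "h v \<in> \<Union>{W. irr W \<and> equ W S}" by blast
      then show "v \<in> f ` (\<Union>{W. irr W \<and> equ W S})" using fh by (metis image_eqI)
    qed
  qed
  then show ?thesis unfolding homog_def using vsp.linear_span_image[OF phi_lin[OF f], of "\<Union>{W. irr W \<and> equ W S}"] by simp
qed

lemma homog_cong:
  assumes S: "invs S" and S': "invs S'" and e: "equ S S'"
  shows "homog S = homog S'"
proof -
  have "\<And>W. equ W S \<longleftrightarrow> equ W S'"
    using equ_trans e equ_sym[OF S e] by blast
  then show ?thesis unfolding homog_def by simp
qed

lemma irr_ne: "irr W \<Longrightarrow> W \<noteq> {0}" unfolding irr_def by simp
lemma irr_min: "irr W \<Longrightarrow> invs U \<Longrightarrow> U \<subseteq> W \<Longrightarrow> U = {0} \<or> U = W" unfolding irr_def by simp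
lemma irr_0: "irr W \<Longrightarrow> 0 \<in> W" using irr_sub subspace_0 by blast

lemma span_invs:
  assumes X: "\<forall>x\<in>Ops. x ` X \<subseteq> X"
  shows "invs (span X)"
  unfolding invs_def
proof (intro conjI ballI)
  show "subspace (span X)" by simp
  fix x assume x: "x \<in> Ops"
  have "x ` span X = span (x ` X)" using vsp.linear_span_image[OF ops_lin[OF x], of X] by simp
  also have "\<dots> \<subseteq> span X" using X x by (simp add: span_mono)
  finally show "x ` span X \<subseteq> span X" .
qed

lemma sumset_invs:
  assumes U: "\<forall>j\<in>J. invs (U j)" and J: "finite J"
  shows "invs (sumset U J)"
proof -
  have sub: "\<forall>j\<in>J. subspace (U j)" using U invs_def by blast
  have "\<forall>x\<in>Ops. x ` (\<Union>j\<in>J. U j) \<subseteq> (\<Union>j\<in>J. U j)"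
    using U unfolding invs_def by blast
  then show ?thesis using sumset_sub[OF sub J] span_invs by simp
qed

lemma sumset_subspace:
  assumes "\<forall>j\<in>J. subspace (U j)" "finite J"
  shows "subspace (sumset U J)"
  using sumset_sub[OF assms] by simp

lemma sumset_contains:
  assumes "\<forall>j\<in>J. subspace (U j)" "finite J" "k \<in> J"
  shows "U k \<subseteq> sumset U J"
  using sumset_sub[OF assms(1,2)] assms(3) span_superset by blast

lemma indep_insert:
  assumes ind: "indep U J" and J: "finite J" and k: "k \<notin> J"
    and sub: "\<forall>j\<in>insert k J. subspace (U j)"
    and int: "U k \<inter> sumset U J \<subseteq> {0}"
  shows "indep U (insert k J)"
  unfolding indep_def
proof (intro allI impI)
  fix u assume u: "(\<forall>j\<in>insert k J. u j \<in> U j) \<and> (\<Sum>j\<in>insert k J. u j) = 0"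
  have s: "u k + (\<Sum>j\<in>J. u j) = 0" using u J k by simp
  have "- u k = (\<Sum>j\<in>J. u j)" using s by (metis add_eq_0_iff)
  also have "\<dots> \<in> sumset U J" unfolding sumset_def using u by blast
  finally have "- u k \<in> sumset U J" .
  then have "- (- u k) \<in> sumset U J"
    using sumset_subspace[of J U] sub J subspace_neg by blast
  then have "u k \<in> U k \<inter> sumset U J" using u by simp
  then have uk: "u k = 0" using int by blast
  then have "(\<Sum>j\<in>J. u j) = 0" using s by simp
  then have "\<forall>j\<in>J. u j = 0" using ind u unfolding indep_def by blast
  then show "\<forall>j\<in>insert k J. u j = 0" using uk by simp
qed

lemma indep_mono:
  assumes ind: "indep U J" and J: "finite J" and K: "K \<subseteq> J"
    and sub: "\<forall>j\<in>J. subspace (U j)"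
  shows "indep U K"
  unfolding indep_def
proof (intro allI impI)
  fix u assume u: "(\<forall>j\<in>K. u j \<in> U j) \<and> (\<Sum>j\<in>K. u j) = 0"
  define u' where "u' j = (if j \<in> K then u j else 0)" for j
  have "\<forall>j\<in>J. u' j \<in> U j" using u sub unfolding u'_def by (auto simp: subspace_0)
  moreover have "(\<Sum>j\<in>J. u' j) = (\<Sum>j\<in>K. u j)"
    unfolding u'_def using J K by (simp add: sum.If_cases Int_absorb1)
  ultimately have "\<forall>j\<in>J. u' j = 0" using ind u unfolding indep_def by simp
  then show "\<forall>j\<in>K. u j = 0"
  proof (intro ballI)
    fix j assume j: "j \<in> K"
    then have "j \<in> J" using K by blast
    then have "u' j = 0" using \<open>\<forall>j\<in>J. u' j = 0\<close> by blast
    then show "u j = 0" using j unfolding u'_def by simp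
  qed
qed

lemma orbit_span:
  assumes S0: "irr S0"
  shows "span (\<Union>f\<in>Phi. f ` S0) = UNIV"
proof -
  let ?X = "\<Union>f\<in>Phi. f ` S0"
  have inv: "\<forall>g\<in>Phi. g ` span ?X \<subseteq> span ?X"
  proof
    fix g assume g: "g \<in> Phi"
    have "g ` span ?X = span (g ` ?X)" using vsp.linear_span_image[OF phi_lin[OF g], of ?X] by simp
    also have "g ` ?X \<subseteq> ?X"
    proof
      fix v assume "v \<in> g ` ?X"
      then obtain f w where fw: "f \<in> Phi" "w \<in> S0" "v = g (f w)" by blast
      then have "v \<in> (g \<circ> f) ` S0" by simp
      moreover have "g \<circ> f \<in> Phi" using phi_comp g fw(1) by blast
      ultimately show "v \<in> ?X" by blast
    qed
    then have "span (g ` ?X) \<subseteq> span ?X" by (rule span_mono)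
    finally show "g ` span ?X \<subseteq> span ?X" .
  qed
  have "span ?X = {0} \<or> span ?X = UNIV" using irrV[OF subspace_span inv] .
  moreover have "span ?X \<noteq> {0}"
  proof
    assume a: "span ?X = {0}"
    have "S0 \<subseteq> ?X"
    proof
      fix v assume "v \<in> S0"
      then have "v \<in> id ` S0" by simp
      then show "v \<in> ?X" using phi_id by blast
    qed
    then have "S0 \<subseteq> {0}" using a span_superset by blast
    then have "S0 = {0}" using irr_0[OF S0] by blast
    then show False using irr_ne[OF S0] by simp
  qed
  ultimately show ?thesis by blast
qed

end


context cl begin

lemma max_family:
  assumes S0: "irr S0"
  shows "\<exists>F. F \<subseteq> Phi \<and> indep (\<lambda>f. f ` S0) F \<and> sumset (\<lambda>f. f ` S0) F = UNIV"
proof -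
  let ?U = "\<lambda>f. f ` S0"
  have Uirr: "\<forall>f\<in>Phi. irr (?U f)" using phi_irr S0 by blast
  have Usub: "\<forall>f\<in>Phi. subspace (?U f)" using Uirr irr_sub by blast
  have Uinv: "\<forall>f\<in>Phi. invs (?U f)" using Uirr irr_invs by blast
  define C where "C = {F. F \<subseteq> Phi \<and> indep ?U F}"
  have finC: "finite C"
    by (rule finite_subset[of C "Pow Phi"]) (auto simp: C_def phi_fin)
  have "{} \<in> C" unfolding C_def indep_def by simp
  then have "C \<noteq> {}" by blast
  then obtain F where F: "F \<in> C" and mx: "\<forall>G\<in>C. F \<subseteq> G \<longrightarrow> F = G"
    using finite_has_maximal[OF finC] by blast
  have FP: "F \<subseteq> Phi" and Find: "indep ?U F" using F C_def by auto
  have finF: "finite F" using FP phi_fin finite_subset by blast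
  have FU: "\<forall>j\<in>F. subspace (?U j)" using FP Usub by blast
  have FI: "\<forall>j\<in>F. invs (?U j)" using FP Uinv by blast
  have cover: "?U f \<subseteq> sumset ?U F" if f: "f \<in> Phi" for f
  proof (cases "f \<in> F")
    case True
    then show ?thesis using sumset_contains[OF FU finF] by blast
  next
    case False
    define K where "K = ?U f \<inter> sumset ?U F"
    have "invs K" unfolding K_def invs_def
    proof (intro conjI ballI)
      have "subspace (?U f)" "subspace (sumset ?U F)" using Usub f sumset_subspace[OF FU finF] by auto
      then show "subspace (?U f \<inter> sumset ?U F)" by (rule subspace_inter)
      fix x assume x: "x \<in> Ops"
      have "x ` ?U f \<subseteq> ?U f" using Uinv f x unfolding invs_def by blast
      moreover have "x ` sumset ?U F \<subseteq> sumset ?U F" using sumset_invs[OF FI finF] x unfolding invs_def by blast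
      ultimately show "x ` (?U f \<inter> sumset ?U F) \<subseteq> ?U f \<inter> sumset ?U F" by blast
    qed
    moreover have "K \<subseteq> ?U f" unfolding K_def by blast
    ultimately have c: "K = {0} \<or> K = ?U f" using irr_min Uirr f by blast
    show ?thesis
    proof (cases "K = {0}")
      case True
      have "indep ?U (insert f F)"
        by (rule indep_insert[OF Find finF False]) (use Usub FP f True K_def in auto)
      then have "insert f F \<in> C" using FP f C_def by blast
      then have "F = insert f F" using mx by blast
      then show ?thesis using False by blast
    next
      case False
      then have "K = ?U f" using c by blast
      then show ?thesis unfolding K_def by blast
    qed
  qed
  have "(\<Union>f\<in>Phi. ?U f) \<subseteq> sumset ?U F" using cover by blast
  then have "span (\<Union>f\<in>Phi. ?U f) \<subseteq> sumset ?U F"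
    using sumset_subspace[OF FU finF] span_minimal by blast
  then have "sumset ?U F = UNIV" using orbit_span[OF S0] by blast
  then show ?thesis using FP Find by blast
qed

lemma dsum_reindex:
  assumes e: "bij_betw e {..<n} J" and ind: "indep U J" and sub: "\<forall>j\<in>J. subspace (U j)"
  shows "direct_sum scale (\<lambda>i. U (e i)) n (sumset U J)"
proof -
  let ?e' = "inv_into {..<n} e"
  have inj: "inj_on e {..<n}" by (rule bij_betw_imp_inj_on[OF e])
  have eJ: "\<And>i. i < n \<Longrightarrow> e i \<in> J" using bij_betw_apply[OF e] by simp
  have e'e: "\<And>i. i < n \<Longrightarrow> ?e' (e i) = i" using inv_into_f_f[OF inj] by simp
  have ee': "\<And>j. j \<in> J \<Longrightarrow> e (?e' j) = j" using bij_betw_inv_into_right[OF e] by simp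
  have e'J: "\<And>j. j \<in> J \<Longrightarrow> ?e' j < n" using bij_betw_apply[OF bij_betw_inv_into[OF e]] by simp
  have re: "\<And>g. (\<Sum>i<n. g (e i)) = (\<Sum>j\<in>J. g j)" by (rule sum.reindex_bij_betw[OF e])
  have c1: "\<forall>j<n. subspace (U (e j))" using sub eJ by blast
  have c2: "\<forall>u. (\<forall>j<n. u j \<in> U (e j)) \<and> (\<Sum>j<n. u j) = 0 \<longrightarrow> (\<forall>j<n. u j = 0)"
  proof (rule allI, rule impI)
    fix u assume u: "(\<forall>j<n. u j \<in> U (e j)) \<and> (\<Sum>j<n. u j) = 0"
    define v where "v j = u (?e' j)" for j
    have "\<forall>j\<in>J. v j \<in> U j" unfolding v_def using u e'J ee' by metis
    moreover have "(\<Sum>j\<in>J. v j) = 0"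
    proof -
      have "(\<Sum>j\<in>J. v j) = (\<Sum>i<n. v (e i))" using re[of v] by simp
      also have "\<dots> = (\<Sum>i<n. u i)" unfolding v_def by (rule sum.cong) (auto simp: e'e)
      finally show ?thesis using u by simp
    qed
    ultimately have v0: "\<forall>j\<in>J. v j = 0" using ind unfolding indep_def by blast
    show "\<forall>j<n. u j = 0"
    proof (intro allI impI)
      fix i assume i: "i < n"
      have "v (e i) = 0" using v0 eJ[OF i] by blast
      then show "u i = 0" unfolding v_def using e'e[OF i] by simp
    qed
  qed
  have c3: "sumset U J = {(\<Sum>j<n. u j) | u. \<forall>j<n. u j \<in> U (e j)}"
  proof
    show "sumset U J \<subseteq> {(\<Sum>j<n. u j) | u. \<forall>j<n. u j \<in> U (e j)}"
    proof
      fix x assume "x \<in> sumset U J"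
      then obtain w where w: "x = (\<Sum>j\<in>J. w j)" "\<forall>j\<in>J. w j \<in> U j" unfolding sumset_def by blast
      have "x = (\<Sum>i<n. w (e i))" using w re[of w] by simp
      moreover have "\<forall>i<n. w (e i) \<in> U (e i)" using w eJ by blast
      ultimately show "x \<in> {(\<Sum>j<n. u j) | u. \<forall>j<n. u j \<in> U (e j)}"
        by (intro CollectI exI[of _ "\<lambda>i. w (e i)"]) simp
    qed
  next
    show "{(\<Sum>j<n. u j) | u. \<forall>j<n. u j \<in> U (e j)} \<subseteq> sumset U J"
    proof
      fix x assume "x \<in> {(\<Sum>j<n. u j) | u. \<forall>j<n. u j \<in> U (e j)}"
      then obtain u where u: "x = (\<Sum>j<n. u j)" "\<forall>j<n. u j \<in> U (e j)" by blast
      define v where "v j = u (?e' j)" for j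
      have "\<forall>j\<in>J. v j \<in> U j" unfolding v_def using u e'J ee' by metis
      moreover have "x = (\<Sum>j\<in>J. v j)"
      proof -
        have "(\<Sum>j\<in>J. v j) = (\<Sum>i<n. v (e i))" using re[of v] by simp
        also have "\<dots> = (\<Sum>i<n. u i)" unfolding v_def by (rule sum.cong) (auto simp: e'e)
        finally show ?thesis using u by simp
      qed
      ultimately show "x \<in> sumset U J" unfolding sumset_def by blast
    qed
  qed
  show ?thesis unfolding direct_sum_def using c1 c2 c3 by blast
qed

lemma sumset_insert:
  assumes J: "finite J" and k: "k \<notin> J"
  shows "sumset U (insert k J) = {x + y | x y. x \<in> U k \<and> y \<in> sumset U J}"
proof
  show "sumset U (insert k J) \<subseteq> {x + y | x y. x \<in> U k \<and> y \<in> sumset U J}"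
  proof
    fix v assume "v \<in> sumset U (insert k J)"
    then obtain u where u: "v = (\<Sum>j\<in>insert k J. u j)" "\<forall>j\<in>insert k J. u j \<in> U j"
      unfolding sumset_def by blast
    have "v = u k + (\<Sum>j\<in>J. u j)" using u J k by simp
    moreover have "(\<Sum>j\<in>J. u j) \<in> sumset U J" unfolding sumset_def using u by blast
    moreover have "u k \<in> U k" using u by blast
    ultimately show "v \<in> {x + y | x y. x \<in> U k \<and> y \<in> sumset U J}" by blast
  qed
next
  show "{x + y | x y. x \<in> U k \<and> y \<in> sumset U J} \<subseteq> sumset U (insert k J)"
  proof
    fix v assume "v \<in> {x + y | x y. x \<in> U k \<and> y \<in> sumset U J}"
    then obtain x u where xu: "v = x + (\<Sum>j\<in>J. u j)" "x \<in> U k" "\<forall>j\<in>J. u j \<in> U j"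
      unfolding sumset_def by blast
    define u' where "u' = u(k := x)"
    have "(\<Sum>j\<in>J. u' j) = (\<Sum>j\<in>J. u j)" unfolding u'_def using k by (intro sum.cong) auto
    then have "v = (\<Sum>j\<in>insert k J. u' j)" using xu J k by (simp add: u'_def)
    moreover have "\<forall>j\<in>insert k J. u' j \<in> U j" using xu k unfolding u'_def by auto
    ultimately show "v \<in> sumset U (insert k J)" unfolding sumset_def by blast
  qed
qed

lemma indep_int:
  assumes ind: "indep U (insert k J)" and J: "finite J" and k: "k \<notin> J"
    and sub: "\<forall>j\<in>insert k J. subspace (U j)"
  shows "U k \<inter> sumset U J = {0}"
proof
  show "U k \<inter> sumset U J \<subseteq> {0}"
  proof
    fix v assume v: "v \<in> U k \<inter> sumset U J"
    then obtain u where u: "v = (\<Sum>j\<in>J. u j)" "\<forall>j\<in>J. u j \<in> U j" unfolding sumset_def by blast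
    define u' where "u' = u(k := - v)"
    have "(\<Sum>j\<in>J. u' j) = (\<Sum>j\<in>J. u j)" unfolding u'_def using k by (intro sum.cong) auto
    then have "(\<Sum>j\<in>insert k J. u' j) = 0" using u J k by (simp add: u'_def)
    moreover have "\<forall>j\<in>insert k J. u' j \<in> U j"
      using u k v sub subspace_neg unfolding u'_def by auto
    ultimately have "\<forall>j\<in>insert k J. u' j = 0" using ind unfolding indep_def by blast
    then have "- v = 0" unfolding u'_def by simp
    then show "v \<in> {0}" by simp
  qed
next
  have "0 \<in> U k" using sub subspace_0 by blast
  moreover have "0 \<in> sumset U J" using sumset_subspace[of J U] sub J subspace_0 by blast
  ultimately show "{0} \<subseteq> U k \<inter> sumset U J" by blast
qed

lemma dim_sumset:
  assumes J: "finite J" and ind: "indep U J" and sub: "\<forall>j\<in>J. subspace (U j)"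
    and d: "\<forall>j\<in>J. dim (U j) = d"
  shows "dim (sumset U J) = card J * d"
  using J ind sub d
proof (induction J rule: finite_induct)
  case empty
  have "sumset U {} = {0}" unfolding sumset_def by simp
  then show ?case by simp
next
  case (insert k J)
  have ind': "indep U J" using indep_mono[OF insert.prems(1)] insert.hyps insert.prems(2) by blast
  have IH: "dim (sumset U J) = card J * d" using insert.IH ind' insert.prems by blast
  have sk: "subspace (U k)" using insert.prems by blast
  have sJ: "subspace (sumset U J)" using sumset_subspace[of J U] insert.prems insert.hyps by blast
  have "dim (sumset U (insert k J)) + dim (U k \<inter> sumset U J) = dim (U k) + dim (sumset U J)"
    unfolding sumset_insert[OF insert.hyps] by (rule dim_sums_Int[OF sk sJ])
  moreover have "U k \<inter> sumset U J = {0}"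
    by (rule indep_int[OF insert.prems(1) insert.hyps insert.prems(2)])
  ultimately have "dim (sumset U (insert k J)) = d + card J * d" using IH insert.prems by simp
  then show ?case using insert.hyps by simp
qed

lemma equ_dim:
  assumes W: "subspace W" and e: "equ W S"
  shows "dim S = dim W"
proof -
  obtain T where add: "\<forall>x\<in>W. \<forall>y\<in>W. T (x + y) = T x + T y"
    and sc: "\<forall>c. \<forall>x\<in>W. T (scale c x) = scale c (T x)"
    and bij: "bij_betw T W S"
    by (insert e[unfolded equ_def], elim exE conjE, rule that, assumption+)
  show ?thesis by (rule dim_eq_map[OF W add sc bij])
qed

lemma phi_dim:
  assumes f: "f \<in> Phi" and W: "subspace W"
  shows "dim (f ` W) = dim W"
proof -
  obtain h where h: "h \<in> Phi" "f \<circ> h = id" "h \<circ> f = id" using phi_inv[OF f] by blast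
  have hf: "\<And>v. h (f v) = v" using fun_cong[OF h(3)] by simp
  have fh: "\<And>v. f (h v) = v" using fun_cong[OF h(2)] by simp
  have fl: "Vector_Spaces.linear scale scale f" by (rule phi_lin[OF f])
  have b: "bij_betw f W (f ` W)"
    by (rule bij_betw_byWitness[where f'=h]) (auto simp: hf fh)
  show ?thesis
    by (rule dim_eq_map[OF W _ _ b]) (auto simp: lin_add[OF fl] lin_scale[OF fl])
qed

context
  fixes S0 F
  assumes S0: "irr S0" and FP: "F \<subseteq> Phi" and Find: "indep (\<lambda>f. f ` S0) F"
    and Fall: "sumset (\<lambda>f. f ` S0) F = UNIV"
begin

lemma F_facts:
  shows "finite F" "\<forall>j\<in>F. irr (j ` S0)" "\<forall>j\<in>F. subspace (j ` S0)" "\<forall>j\<in>F. invs (j ` S0)"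
  using FP phi_fin finite_subset phi_irr[OF _ S0] irr_sub irr_invs by blast+

lemma equiv_some:
  assumes S: "irr S"
  shows "\<exists>k\<in>F. equ S (k ` S0)"
proof -
  have "S \<noteq> {0}" "0 \<in> S" using irr_ne[OF S] irr_0[OF S] by auto
  then obtain s where s: "s \<in> S" "s \<noteq> 0" by blast
  have sF: "s \<in> sumset (\<lambda>f. f ` S0) F" using Fall by simp
  have "\<exists>k\<in>F. dec (\<lambda>f. f ` S0) F s k \<noteq> 0"
  proof (rule ccontr)
    assume "\<not> (\<exists>k\<in>F. dec (\<lambda>f. f ` S0) F s k \<noteq> 0)"
    then have "s = 0" using sumset_dec_zero[OF sF] by blast
    then show False using s by simp
  qed
  then obtain k where k: "k \<in> F" "dec (\<lambda>f. f ` S0) F s k \<noteq> 0" by blast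
  have "equ S (k ` S0)"
    by (rule schur[OF Find _ S _ k(1) s(1) k(2)]) (use F_facts Fall in auto)
  then show ?thesis using k by blast
qed

lemma dim_irr:
  assumes S: "irr S"
  shows "dim S = dim S0"
proof -
  obtain k where k: "k \<in> F" "equ S (k ` S0)" using equiv_some[OF S] by blast
  have "dim (k ` S0) = dim S" by (rule equ_dim[OF irr_sub[OF S] k(2)])
  moreover have "dim (k ` S0) = dim S0" using phi_dim FP k(1) irr_sub[OF S0] by blast
  ultimately show ?thesis by simp
qed

lemma homog_eq:
  assumes S: "irr S"
  shows "homog S = sumset (\<lambda>f. f ` S0) {k\<in>F. equ (k ` S0) S}"
proof -
  let ?U = "\<lambda>f. f ` S0"
  let ?J = "{k\<in>F. equ (k ` S0) S}"
  have finF: "finite F" and Uirr: "\<forall>j\<in>F. irr (j ` S0)" and Usub: "\<forall>j\<in>F. subspace (j ` S0)"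
    and Uinv: "\<forall>j\<in>F. invs (j ` S0)" using F_facts by auto
  have finJ: "finite ?J" using finF by simp
  have JsubF: "?J \<subseteq> F" by blast
  have Jsub: "\<forall>j\<in>?J. subspace (?U j)" using Usub by blast
  have sJ: "subspace (sumset ?U ?J)" using sumset_subspace[OF Jsub finJ] .
  show ?thesis
  proof
    show "homog S \<subseteq> sumset ?U ?J"
      unfolding homog_def
    proof (rule span_minimal[OF _ sJ], rule subsetI)
      fix v assume "v \<in> \<Union>{W. irr W \<and> equ W S}"
      then obtain W where W: "irr W" "equ W S" "v \<in> W" by blast
      have vF: "v \<in> sumset ?U F" using Fall by simp
      have zero: "dec ?U F v k = 0" if k: "k \<in> F - ?J" for k
      proof (rule ccontr)
        assume nz: "dec ?U F v k \<noteq> 0"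
        have "equ W (k ` S0)"
          by (rule schur[OF Find Uirr W(1) _ _ W(3) nz]) (use Fall k in auto)
        then have "equ (k ` S0) W" using equ_sym irr_invs[OF W(1)] by blast
        then have "equ (k ` S0) S" using equ_trans W(2) by blast
        then show False using k by blast
      qed
      have dv: "(\<forall>j\<in>F. dec ?U F v j \<in> ?U j) \<and> v = (\<Sum>j\<in>F. dec ?U F v j)"
        by (rule dec_exists[OF vF])
      have "(\<Sum>j\<in>F. dec ?U F v j) = (\<Sum>j\<in>?J. dec ?U F v j)"
        by (rule sum.mono_neutral_right[OF finF JsubF]) (use zero in blast)
      then have "v = (\<Sum>j\<in>?J. dec ?U F v j)" using dv by simp
      moreover have "\<forall>j\<in>?J. dec ?U F v j \<in> ?U j" using dv by blast
      ultimately show "v \<in> sumset ?U ?J" unfolding sumset_def by blast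
    qed
  next
    have "(\<Union>j\<in>?J. ?U j) \<subseteq> \<Union>{W. irr W \<and> equ W S}" using Uirr by blast
    then have "span (\<Union>j\<in>?J. ?U j) \<subseteq> homog S" unfolding homog_def by (rule span_mono)
    then show "sumset ?U ?J \<subseteq> homog S" using sumset_sub[OF Jsub finJ] by simp
  qed
qed

lemma transitive:
  assumes S: "irr S" and S': "irr S'"
  shows "\<exists>g\<in>Phi. g ` homog S = homog S'"
proof -
  obtain k where k: "k \<in> F" "equ S (k ` S0)" using equiv_some[OF S] by blast
  obtain k' where k': "k' \<in> F" "equ S' (k' ` S0)" using equiv_some[OF S'] by blast
  have kP: "k \<in> Phi" and k'P: "k' \<in> Phi" using k k' FP by auto
  have kirr: "irr (k ` S0)" and k'irr: "irr (k' ` S0)" using phi_irr[OF kP S0] phi_irr[OF k'P S0] by auto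
  have h1: "homog S = homog (k ` S0)" by (rule homog_cong[OF irr_invs[OF S] irr_invs[OF kirr] k(2)])
  have h2: "homog S' = homog (k' ` S0)" by (rule homog_cong[OF irr_invs[OF S'] irr_invs[OF k'irr] k'(2)])
  obtain h where h: "h \<in> Phi" "k \<circ> h = id" "h \<circ> k = id" using phi_inv[OF kP] by blast
  have hk: "\<And>v. h (k v) = v" using fun_cong[OF h(3)] by simp
  let ?g = "k' \<circ> h"
  have gP: "?g \<in> Phi" using phi_comp[OF k'P h(1)] .
  have "?g ` k ` S0 = k' ` S0" using hk by (simp add: image_comp comp_def)
  then have "?g ` homog (k ` S0) = homog (k' ` S0)" using homog_image[OF gP kirr] by simp
  then show ?thesis using gP h1 h2 by (intro bexI[of _ ?g]) simp_all
qed

lemma dim_pos: "dim S0 > 0"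
proof -
  have "\<not> S0 \<subseteq> {0}" using irr_ne[OF S0] irr_0[OF S0] by blast
  then show ?thesis using dim_eq_0 by (metis gr0I)
qed

lemma dim_homog:
  assumes S: "irr S"
  shows "dim (homog S) = card {k\<in>F. equ (k ` S0) S} * dim S0"
proof -
  have finF: "finite F" and Usub: "\<forall>j\<in>F. subspace (j ` S0)" using F_facts by auto
  have ind: "indep (\<lambda>f. f ` S0) {k\<in>F. equ (k ` S0) S}"
    by (rule indep_mono[OF Find finF _ Usub]) blast
  have d: "\<forall>j\<in>{k\<in>F. equ (k ` S0) S}. dim (j ` S0) = dim S0"
    using phi_dim FP irr_sub[OF S0] by blast
  show ?thesis unfolding homog_eq[OF S]
    by (rule dim_sumset[OF _ ind _ d]) (use finF Usub in auto)
qed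

lemma mult_const:
  assumes S: "irr S"
  shows "card {k\<in>F. equ (k ` S0) S} = card {k\<in>F. equ (k ` S0) S0}"
proof -
  obtain g where g: "g \<in> Phi" "g ` homog S0 = homog S" using transitive[OF S0 S] by blast
  have "dim (g ` homog S0) = dim (homog S0)" by (rule phi_dim[OF g(1)]) (simp add: homog_def)
  then have "card {k\<in>F. equ (k ` S0) S} * dim S0 = card {k\<in>F. equ (k ` S0) S0} * dim S0"
    using dim_homog[OF S] dim_homog[OF S0] g(2) by simp
  moreover have "\<not> S0 \<subseteq> {0}" using irr_ne[OF S0] irr_0[OF S0] by blast
  ultimately show ?thesis using dim_pos by simp
qed

lemma homog_dsum:
  assumes S: "irr S"
  shows "\<exists>U. (\<forall>j<card {k\<in>F. equ (k ` S0) S0}. irr (U j) \<and> equ (U j) S) \<and>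
      direct_sum scale U (card {k\<in>F. equ (k ` S0) S0}) (homog S)"
proof -
  let ?J = "{k\<in>F. equ (k ` S0) S}"
  have finF: "finite F" and Usub: "\<forall>j\<in>F. subspace (j ` S0)" and Uirr: "\<forall>j\<in>F. irr (j ` S0)"
    using F_facts by auto
  have ind: "indep (\<lambda>f. f ` S0) ?J" by (rule indep_mono[OF Find finF _ Usub]) blast
  obtain e where e: "bij_betw e {0..<card ?J} ?J" using ex_bij_betw_nat_finite[of ?J] finF by auto
  have e': "bij_betw e {..<card ?J} ?J" using e by (simp add: atLeast0LessThan)
  have ds: "direct_sum scale (\<lambda>i. e i ` S0) (card ?J) (sumset (\<lambda>f. f ` S0) ?J)"
    by (rule dsum_reindex[OF e' ind]) (use Usub in auto)
  have pr: "\<forall>j<card ?J. irr (e j ` S0) \<and> equ (e j ` S0) S"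
    using bij_betw_apply[OF e'] Uirr by auto
  show ?thesis using ds pr mult_const[OF S] homog_eq[OF S] by (intro exI[of _ "\<lambda>i. e i ` S0"]) simp
qed

lemma compl_red:
  shows "\<exists>n U. (\<forall>j<n. irr (U j)) \<and> direct_sum scale U n UNIV"
proof -
  have finF: "finite F" and Usub: "\<forall>j\<in>F. subspace (j ` S0)" and Uirr: "\<forall>j\<in>F. irr (j ` S0)"
    using F_facts by auto
  obtain e where e: "bij_betw e {0..<card F} F" using ex_bij_betw_nat_finite[of F] finF by auto
  have e': "bij_betw e {..<card F} F" using e by (simp add: atLeast0LessThan)
  have ds: "direct_sum scale (\<lambda>i. e i ` S0) (card F) (sumset (\<lambda>f. f ` S0) F)"
    by (rule dsum_reindex[OF e' Find Usub])
  have "\<forall>j<card F. irr (e j ` S0)" using bij_betw_apply[OF e'] Uirr by auto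
  then show ?thesis using ds Fall by (intro exI[of _ "card F"] exI[of _ "\<lambda>i. e i ` S0"]) simp
qed

end

lemma main_locale:
  shows "(\<exists>n U. (\<forall>j<n. irr (U j)) \<and> direct_sum scale U n UNIV)
    \<and> (\<forall>S S'. irr S \<and> irr S' \<longrightarrow> (\<exists>g\<in>Phi. g ` homog S = homog S'))
    \<and> (\<exists>m. \<forall>S. irr S \<longrightarrow> (\<exists>U. (\<forall>j<m. irr (U j) \<and> equ (U j) S) \<and> direct_sum scale U m (homog S)))
    \<and> (\<forall>S S'. irr S \<and> irr S' \<longrightarrow> dim S = dim S')"
proof -
  obtain S0 where S0: "irr S0" using exists_irr by blast
  obtain F where F: "F \<subseteq> Phi" "indep (\<lambda>f. f ` S0) F" "sumset (\<lambda>f. f ` S0) F = UNIV"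
    using max_family[OF S0] by blast
  note c = compl_red[OF S0 F] transitive[OF S0 F] homog_dsum[OF S0 F] dim_irr[OF S0 F]
  show ?thesis
  proof (intro conjI)
    show "\<exists>n U. (\<forall>j<n. irr (U j)) \<and> direct_sum scale U n UNIV" by (rule c(1))
    show "\<forall>S S'. irr S \<and> irr S' \<longrightarrow> (\<exists>g\<in>Phi. g ` homog S = homog S')" using c(2) by blast
    show "\<exists>m. \<forall>S. irr S \<longrightarrow> (\<exists>U. (\<forall>j<m. irr (U j) \<and> equ (U j) S) \<and> direct_sum scale U m (homog S))"
      using c(3) by blast
    show "\<forall>S S'. irr S \<and> irr S' \<longrightarrow> dim S = dim S'" using c(4) by metis
  qed
qed

end



locale bs =
  fixes G C :: "'a monoid" and I :: "'a set"
    and scale :: "'k::field \<Rightarrow> 'v::ab_group_add \<Rightarrow> 'v"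
    and \<beta> \<rho> :: "'a \<Rightarrow> 'v \<Rightarrow> 'v"
  assumes sb: "skew_brace G C" and fin: "finite (carrier G)"
    and vs: "vector_space scale"
    and idl: "brace_ideal G C I"
    and rep: "brace_rep G C scale \<beta> \<rho>"
    and irrA: "irred_sub scale (carrier G) \<beta> \<rho> UNIV"
begin

lemma gG: "group G" and gC: "group C" and cCG: "carrier C = carrier G"
  using sb unfolding skew_brace_def by auto

lemma nG: "I \<lhd> G" and nC: "I \<lhd> C" and lamI: "\<And>a x. a \<in> carrier G \<Longrightarrow> x \<in> I \<Longrightarrow> brace_lambda G C a x \<in> I"
  using idl unfolding brace_ideal_def by auto

lemma IG: "I \<subseteq> carrier G"
  using subgroup.subset[OF normal_imp_subgroup[OF nG]] .

lemma one_I: "\<one>\<^bsub>G\<^esub> \<in> I"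
  using subgroup.one_closed[OF normal_imp_subgroup[OF nG]] .

lemma lin_b: "a \<in> carrier G \<Longrightarrow> Vector_Spaces.linear scale scale (\<beta> a)"
  and bij_b: "a \<in> carrier G \<Longrightarrow> bij (\<beta> a)"
  and lin_r: "a \<in> carrier G \<Longrightarrow> Vector_Spaces.linear scale scale (\<rho> a)"
  and bij_r: "a \<in> carrier G \<Longrightarrow> bij (\<rho> a)"
  using rep unfolding brace_rep_def by auto

lemma b_mult: "a \<in> carrier G \<Longrightarrow> b \<in> carrier G \<Longrightarrow> \<beta> (a \<otimes>\<^bsub>G\<^esub> b) = \<beta> a \<circ> \<beta> b"
  and r_mult: "a \<in> carrier G \<Longrightarrow> b \<in> carrier G \<Longrightarrow> \<rho> (a \<otimes>\<^bsub>C\<^esub> b) = \<rho> a \<circ> \<rho> b"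
  and b_lop: "a \<in> carrier G \<Longrightarrow> b \<in> carrier G \<Longrightarrow> \<beta> (brace_lambda_op G C a b) = \<rho> a \<circ> \<beta> b \<circ> inv_into UNIV (\<rho> a)"
  using rep unfolding brace_rep_def by auto

lemma b_one: "\<beta> \<one>\<^bsub>G\<^esub> = id"
proof -
  have o: "\<one>\<^bsub>G\<^esub> \<in> carrier G" using group.is_monoid[OF gG] monoid.one_closed by blast
  have "\<beta> \<one>\<^bsub>G\<^esub> = \<beta> \<one>\<^bsub>G\<^esub> \<circ> \<beta> \<one>\<^bsub>G\<^esub>"
    using b_mult[OF o o] group.is_monoid[OF gG] monoid.l_one o by metis
  then have "\<And>x. \<beta> \<one>\<^bsub>G\<^esub> (\<beta> \<one>\<^bsub>G\<^esub> x) = \<beta> \<one>\<^bsub>G\<^esub> x" by (metis comp_apply)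
  then have "\<And>x. \<beta> \<one>\<^bsub>G\<^esub> x = x" using bij_b[OF o] unfolding bij_def inj_def by blast
  then show ?thesis by (simp add: fun_eq_iff)
qed

lemma r_one: "\<rho> \<one>\<^bsub>C\<^esub> = id"
proof -
  have o: "\<one>\<^bsub>C\<^esub> \<in> carrier G" using group.is_monoid[OF gC] monoid.one_closed cCG by blast
  have "\<rho> \<one>\<^bsub>C\<^esub> = \<rho> \<one>\<^bsub>C\<^esub> \<circ> \<rho> \<one>\<^bsub>C\<^esub>"
    using r_mult[OF o o] group.is_monoid[OF gC] monoid.l_one o cCG by metis
  then have "\<And>x. \<rho> \<one>\<^bsub>C\<^esub> (\<rho> \<one>\<^bsub>C\<^esub> x) = \<rho> \<one>\<^bsub>C\<^esub> x" by (metis comp_apply)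
  then have "\<And>x. \<rho> \<one>\<^bsub>C\<^esub> x = x" using bij_r[OF o] unfolding bij_def inj_def by blast
  then show ?thesis by (simp add: fun_eq_iff)
qed

lemma Gm: "a \<in> carrier G \<Longrightarrow> b \<in> carrier G \<Longrightarrow> a \<otimes>\<^bsub>G\<^esub> b \<in> carrier G"
  by (rule monoid.m_closed[OF group.is_monoid[OF gG]])
lemma Cm: "a \<in> carrier G \<Longrightarrow> b \<in> carrier G \<Longrightarrow> a \<otimes>\<^bsub>C\<^esub> b \<in> carrier G"
  using monoid.m_closed[OF group.is_monoid[OF gC], of a b] cCG by simp
lemma Gi: "a \<in> carrier G \<Longrightarrow> inv\<^bsub>G\<^esub> a \<in> carrier G"
  by (rule group.inv_closed[OF gG])
lemma Ci: "a \<in> carrier G \<Longrightarrow> inv\<^bsub>C\<^esub> a \<in> carrier G"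
  using group.inv_closed[OF gC, of a] cCG by simp
lemma Ga: "a \<in> carrier G \<Longrightarrow> b \<in> carrier G \<Longrightarrow> c \<in> carrier G \<Longrightarrow>
   a \<otimes>\<^bsub>G\<^esub> b \<otimes>\<^bsub>G\<^esub> c = a \<otimes>\<^bsub>G\<^esub> (b \<otimes>\<^bsub>G\<^esub> c)"
  by (rule monoid.m_assoc[OF group.is_monoid[OF gG]])
lemma Ca: "a \<in> carrier G \<Longrightarrow> b \<in> carrier G \<Longrightarrow> c \<in> carrier G \<Longrightarrow>
   a \<otimes>\<^bsub>C\<^esub> b \<otimes>\<^bsub>C\<^esub> c = a \<otimes>\<^bsub>C\<^esub> (b \<otimes>\<^bsub>C\<^esub> c)"
  using monoid.m_assoc[OF group.is_monoid[OF gC], of a b c] cCG by simp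
lemma Gone: "\<one>\<^bsub>G\<^esub> \<in> carrier G"
  by (rule monoid.one_closed[OF group.is_monoid[OF gG]])
lemma Cone: "\<one>\<^bsub>C\<^esub> \<in> carrier G"
  using monoid.one_closed[OF group.is_monoid[OF gC]] cCG by simp
lemma Grinv: "a \<in> carrier G \<Longrightarrow> a \<otimes>\<^bsub>G\<^esub> inv\<^bsub>G\<^esub> a = \<one>\<^bsub>G\<^esub>"
  by (rule group.r_inv[OF gG])
lemma Glinv: "a \<in> carrier G \<Longrightarrow> inv\<^bsub>G\<^esub> a \<otimes>\<^bsub>G\<^esub> a = \<one>\<^bsub>G\<^esub>"
  by (rule group.l_inv[OF gG])
lemma Crinv: "a \<in> carrier G \<Longrightarrow> a \<otimes>\<^bsub>C\<^esub> inv\<^bsub>C\<^esub> a = \<one>\<^bsub>C\<^esub>"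
  using group.r_inv[OF gC, of a] cCG by simp
lemma Clinv: "a \<in> carrier G \<Longrightarrow> inv\<^bsub>C\<^esub> a \<otimes>\<^bsub>C\<^esub> a = \<one>\<^bsub>C\<^esub>"
  using group.l_inv[OF gC, of a] cCG by simp
lemma Glone: "a \<in> carrier G \<Longrightarrow> \<one>\<^bsub>G\<^esub> \<otimes>\<^bsub>G\<^esub> a = a"
  by (rule monoid.l_one[OF group.is_monoid[OF gG]])
lemma Grone: "a \<in> carrier G \<Longrightarrow> a \<otimes>\<^bsub>G\<^esub> \<one>\<^bsub>G\<^esub> = a"
  by (rule monoid.r_one[OF group.is_monoid[OF gG]])
lemma Clone: "a \<in> carrier G \<Longrightarrow> \<one>\<^bsub>C\<^esub> \<otimes>\<^bsub>C\<^esub> a = a"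
  using monoid.l_one[OF group.is_monoid[OF gC], of a] cCG by simp
lemma Crone: "a \<in> carrier G \<Longrightarrow> a \<otimes>\<^bsub>C\<^esub> \<one>\<^bsub>C\<^esub> = a"
  using monoid.r_one[OF group.is_monoid[OF gC], of a] cCG by simp

lemma I_m: "a \<in> I \<Longrightarrow> b \<in> I \<Longrightarrow> a \<otimes>\<^bsub>G\<^esub> b \<in> I"
  by (rule subgroup.m_closed[OF normal_imp_subgroup[OF nG]])
lemma I_i: "a \<in> I \<Longrightarrow> inv\<^bsub>G\<^esub> a \<in> I"
  by (rule subgroup.m_inv_closed[OF normal_imp_subgroup[OF nG]])

lemma lop_closed: "b \<in> carrier G \<Longrightarrow> c \<in> carrier G \<Longrightarrow> brace_lambda_op G C b c \<in> carrier G"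
  unfolding brace_lambda_op_def using Gm Cm Gi by blast

lemma lop_I:
  assumes d: "d \<in> carrier G" and e: "e \<in> I"
  shows "brace_lambda_op G C d e \<in> I"
proof -
  have eG: "e \<in> carrier G" using e IG by blast
  have l: "inv\<^bsub>G\<^esub> d \<otimes>\<^bsub>G\<^esub> (d \<otimes>\<^bsub>C\<^esub> e) \<in> I"
    using lamI[OF d e] unfolding brace_lambda_def .
  have "d \<otimes>\<^bsub>G\<^esub> (inv\<^bsub>G\<^esub> d \<otimes>\<^bsub>G\<^esub> (d \<otimes>\<^bsub>C\<^esub> e)) \<otimes>\<^bsub>G\<^esub> inv\<^bsub>G\<^esub> d \<in> I"
    by (rule normal.inv_op_closed2[OF nG d l])
  moreover have "d \<otimes>\<^bsub>G\<^esub> (inv\<^bsub>G\<^esub> d \<otimes>\<^bsub>G\<^esub> (d \<otimes>\<^bsub>C\<^esub> e)) = d \<otimes>\<^bsub>C\<^esub> e"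
    using Ga[OF d Gi[OF d] Cm[OF d eG]] Grinv[OF d] Glone[OF Cm[OF d eG]] by simp
  ultimately show ?thesis unfolding brace_lambda_op_def by simp
qed

lemma t_I:
  assumes a: "a \<in> I" and c: "c \<in> carrier G"
  shows "inv\<^bsub>G\<^esub> c \<otimes>\<^bsub>G\<^esub> brace_lambda_op G C a c \<in> I"
proof -
  have aG: "a \<in> carrier G" using a IG by blast
  have cC: "c \<in> carrier C" using c cCG by simp
  define j where "j = inv\<^bsub>C\<^esub> c \<otimes>\<^bsub>C\<^esub> a \<otimes>\<^bsub>C\<^esub> c"
  have jI: "j \<in> I" unfolding j_def by (rule normal.inv_op_closed1[OF nC cC a])
  have jG: "j \<in> carrier G" using jI IG by blast
  have cj: "c \<otimes>\<^bsub>C\<^esub> j = a \<otimes>\<^bsub>C\<^esub> c"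
  proof -
    have "c \<otimes>\<^bsub>C\<^esub> j = c \<otimes>\<^bsub>C\<^esub> (inv\<^bsub>C\<^esub> c \<otimes>\<^bsub>C\<^esub> (a \<otimes>\<^bsub>C\<^esub> c))"
      unfolding j_def using Ca[OF Ci[OF c] aG c] by simp
    also have "\<dots> = (c \<otimes>\<^bsub>C\<^esub> inv\<^bsub>C\<^esub> c) \<otimes>\<^bsub>C\<^esub> (a \<otimes>\<^bsub>C\<^esub> c)"
      using Ca[OF c Ci[OF c] Cm[OF aG c]] by simp
    also have "\<dots> = a \<otimes>\<^bsub>C\<^esub> c" using Crinv[OF c] Clone[OF Cm[OF aG c]] by simp
    finally show ?thesis .
  qed
  have lI: "inv\<^bsub>G\<^esub> c \<otimes>\<^bsub>G\<^esub> (c \<otimes>\<^bsub>C\<^esub> j) \<in> I"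
    using lamI[OF c jI] unfolding brace_lambda_def .
  have "inv\<^bsub>G\<^esub> c \<otimes>\<^bsub>G\<^esub> brace_lambda_op G C a c
      = (inv\<^bsub>G\<^esub> c \<otimes>\<^bsub>G\<^esub> (c \<otimes>\<^bsub>C\<^esub> j)) \<otimes>\<^bsub>G\<^esub> inv\<^bsub>G\<^esub> a"
    unfolding brace_lambda_op_def cj using Ga[OF Gi[OF c] Cm[OF aG c] Gi[OF aG]] by simp
  also have "\<dots> \<in> I" using I_m[OF lI I_i[OF a]] .
  finally show ?thesis .
qed

lemma comm:
  assumes b: "b \<in> carrier G" and c: "c \<in> carrier G"
  shows "\<rho> b (\<beta> c x) = \<beta> (brace_lambda_op G C b c) (\<rho> b x)"
proof -
  have "inv_into UNIV (\<rho> b) (\<rho> b x) = x" using bij_r[OF b] by (simp add: bij_is_inj inv_into_f_f)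
  then show ?thesis using b_lop[OF b c] by simp
qed

lemma rr_inv: "d \<in> carrier G \<Longrightarrow> \<rho> d (\<rho> (inv\<^bsub>C\<^esub> d) x) = x"
  using r_mult[OF _ Ci, of d] Crinv[of d] r_one by (metis comp_apply id_apply)
lemma rr_inv2: "d \<in> carrier G \<Longrightarrow> \<rho> (inv\<^bsub>C\<^esub> d) (\<rho> d x) = x"
  using r_mult[OF Ci, of d d] Clinv[of d] r_one by (metis comp_apply id_apply)
lemma bb_inv: "d \<in> carrier G \<Longrightarrow> \<beta> d (\<beta> (inv\<^bsub>G\<^esub> d) x) = x"
  using b_mult[OF _ Gi, of d] Grinv[of d] b_one by (metis comp_apply id_apply)
lemma bb_inv2: "d \<in> carrier G \<Longrightarrow> \<beta> (inv\<^bsub>G\<^esub> d) (\<beta> d x) = x"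
  using b_mult[OF Gi, of d d] Glinv[of d] b_one by (metis comp_apply id_apply)

lemma comm2:
  assumes d: "d \<in> carrier G" and e: "e \<in> carrier G"
  shows "\<beta> e (\<rho> d x) = \<rho> d (\<beta> (brace_lambda_op G C (inv\<^bsub>C\<^esub> d) e) x)"
proof -
  have "\<beta> (brace_lambda_op G C (inv\<^bsub>C\<^esub> d) e) x
      = \<beta> (brace_lambda_op G C (inv\<^bsub>C\<^esub> d) e) (\<rho> (inv\<^bsub>C\<^esub> d) (\<rho> d x))"
    using rr_inv2[OF d] by simp
  also have "\<dots> = \<rho> (inv\<^bsub>C\<^esub> d) (\<beta> e (\<rho> d x))"
    using comm[OF Ci[OF d] e] by simp
  finally show ?thesis using rr_inv[OF d] by simp
qed

definition "Phi = (\<lambda>g. rep_phi \<beta> \<rho> g) ` (carrier G \<times> carrier G)"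
definition "Ops = \<beta> ` I \<union> \<rho> ` I"

lemma rp: "rep_phi \<beta> \<rho> (a, b) = \<beta> a \<circ> \<rho> b" unfolding rep_phi_def by simp

lemma PhiI: "a \<in> carrier G \<Longrightarrow> b \<in> carrier G \<Longrightarrow> \<beta> a \<circ> \<rho> b \<in> Phi"
  unfolding Phi_def using rp by (metis SigmaI image_eqI)

lemma PhiE: "f \<in> Phi \<Longrightarrow> (\<And>a b. a \<in> carrier G \<Longrightarrow> b \<in> carrier G \<Longrightarrow> f = \<beta> a \<circ> \<rho> b \<Longrightarrow> P) \<Longrightarrow> P"
  unfolding Phi_def using rp by auto

lemma phi_comp': "f \<in> Phi \<Longrightarrow> g \<in> Phi \<Longrightarrow> f \<circ> g \<in> Phi"
proof -
  assume f: "f \<in> Phi" and g: "g \<in> Phi"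
  obtain a b where ab: "a \<in> carrier G" "b \<in> carrier G" "f = \<beta> a \<circ> \<rho> b" using f by (rule PhiE)
  obtain c d where cd: "c \<in> carrier G" "d \<in> carrier G" "g = \<beta> c \<circ> \<rho> d" using g by (rule PhiE)
  have l: "brace_lambda_op G C b c \<in> carrier G" by (rule lop_closed[OF ab(2) cd(1)])
  have "f \<circ> g = \<beta> (a \<otimes>\<^bsub>G\<^esub> brace_lambda_op G C b c) \<circ> \<rho> (b \<otimes>\<^bsub>C\<^esub> d)"
  proof
    fix x
    have "(f \<circ> g) x = \<beta> a (\<beta> (brace_lambda_op G C b c) (\<rho> b (\<rho> d x)))"
      using ab cd comm[OF ab(2) cd(1)] by simp
    also have "\<dots> = (\<beta> (a \<otimes>\<^bsub>G\<^esub> brace_lambda_op G C b c) \<circ> \<rho> (b \<otimes>\<^bsub>C\<^esub> d)) x"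
      using b_mult[OF ab(1) l] r_mult[OF ab(2) cd(2)] by simp
    finally show "(f \<circ> g) x = (\<beta> (a \<otimes>\<^bsub>G\<^esub> brace_lambda_op G C b c) \<circ> \<rho> (b \<otimes>\<^bsub>C\<^esub> d)) x" .
  qed
  then show ?thesis using PhiI[OF Gm[OF ab(1) l] Cm[OF ab(2) cd(2)]] by simp
qed

lemma phi_inv':
  assumes f: "f \<in> Phi"
  shows "\<exists>h\<in>Phi. f \<circ> h = id \<and> h \<circ> f = id"
proof -
  obtain a b where ab: "a \<in> carrier G" "b \<in> carrier G" "f = \<beta> a \<circ> \<rho> b" using f by (rule PhiE)
  define b' where "b' = inv\<^bsub>C\<^esub> b"
  define a' where "a' = inv\<^bsub>G\<^esub> a"
  have b'G: "b' \<in> carrier G" and a'G: "a' \<in> carrier G" using Ci[OF ab(2)] Gi[OF ab(1)] b'_def a'_def by auto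
  let ?h = "\<beta> (brace_lambda_op G C b' a') \<circ> \<rho> b'"
  have hP: "?h \<in> Phi" by (rule PhiI[OF lop_closed[OF b'G a'G] b'G])
  have h: "\<And>x. ?h x = \<rho> b' (\<beta> a' x)" using comm[OF b'G a'G] by simp
  have "f \<circ> ?h = id"
  proof
    fix x
    have "(f \<circ> ?h) x = \<beta> a (\<rho> b (\<rho> b' (\<beta> a' x)))" using ab(3) h by simp
    also have "\<dots> = x" using rr_inv[OF ab(2)] bb_inv[OF ab(1)] unfolding a'_def b'_def by simp
    finally show "(f \<circ> ?h) x = id x" by simp
  qed
  moreover have "?h \<circ> f = id"
  proof
    fix x
    have "(?h \<circ> f) x = \<rho> b' (\<beta> a' (\<beta> a (\<rho> b x)))" using ab(3) h by simp
    also have "\<dots> = x" using rr_inv2[OF ab(2)] bb_inv2[OF ab(1)] unfolding a'_def b'_def by simp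
    finally show "(?h \<circ> f) x = id x" by simp
  qed
  ultimately show ?thesis using hP by blast
qed

lemma Gcan: "c \<in> carrier G \<Longrightarrow> x \<in> carrier G \<Longrightarrow> c \<otimes>\<^bsub>G\<^esub> (inv\<^bsub>G\<^esub> c \<otimes>\<^bsub>G\<^esub> x) = x"
  using Ga[OF _ Gi, of c c x] Grinv[of c] Glone[of x] by simp
lemma Ccan: "c \<in> carrier G \<Longrightarrow> x \<in> carrier G \<Longrightarrow> c \<otimes>\<^bsub>C\<^esub> (inv\<^bsub>C\<^esub> c \<otimes>\<^bsub>C\<^esub> x) = x"
  using Ca[OF _ Ci, of c c x] Crinv[of c] Clone[of x] by simp

lemma conj':
  assumes f: "f \<in> Phi" and x: "x \<in> Ops"
  shows "\<exists>y\<in>Ops. \<exists>z\<in>Ops. x \<circ> f = f \<circ> y \<circ> z"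
proof -
  obtain c d where cd: "c \<in> carrier G" "d \<in> carrier G" "f = \<beta> c \<circ> \<rho> d" using f by (rule PhiE)
  define d' where "d' = inv\<^bsub>C\<^esub> d"
  have d'G: "d' \<in> carrier G" using Ci[OF cd(2)] d'_def by simp
  show ?thesis
  proof (cases "x \<in> \<beta> ` I")
    case True
    then obtain a where a: "a \<in> I" "x = \<beta> a" by blast
    have aG: "a \<in> carrier G" using a IG by blast
    define e where "e = inv\<^bsub>G\<^esub> c \<otimes>\<^bsub>G\<^esub> a \<otimes>\<^bsub>G\<^esub> c"
    have eI: "e \<in> I" unfolding e_def by (rule normal.inv_op_closed1[OF nG cd(1) a(1)])
    have eG: "e \<in> carrier G" using eI IG by blast
    have ce: "c \<otimes>\<^bsub>G\<^esub> e = a \<otimes>\<^bsub>G\<^esub> c"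
      unfolding e_def using Ga[OF Gi[OF cd(1)] aG cd(1)] Gcan[OF cd(1) Gm[OF aG cd(1)]] by simp
    let ?y = "\<beta> (brace_lambda_op G C d' e)"
    let ?z = "\<beta> \<one>\<^bsub>G\<^esub>"
    have yO: "?y \<in> Ops" unfolding Ops_def using lop_I[OF d'G eI] by blast
    have zO: "?z \<in> Ops" unfolding Ops_def using one_I by blast
    have "x \<circ> f = f \<circ> ?y \<circ> ?z"
    proof
      fix w
      have "(x \<circ> f) w = \<beta> (a \<otimes>\<^bsub>G\<^esub> c) (\<rho> d w)" using a cd b_mult[OF aG cd(1)] by simp
      also have "\<dots> = \<beta> c (\<beta> e (\<rho> d w))" using ce[symmetric] b_mult[OF cd(1) eG] by simp
      also have "\<dots> = \<beta> c (\<rho> d (?y w))" using comm2[OF cd(2) eG] d'_def by simp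
      also have "\<dots> = (f \<circ> ?y \<circ> ?z) w" using cd(3) b_one by simp
      finally show "(x \<circ> f) w = (f \<circ> ?y \<circ> ?z) w" .
    qed
    then show ?thesis using yO zO by blast
  next
    case False
    then obtain a where a: "a \<in> I" "x = \<rho> a" using x Ops_def by blast
    have aG: "a \<in> carrier G" using a IG by blast
    define t where "t = inv\<^bsub>G\<^esub> c \<otimes>\<^bsub>G\<^esub> brace_lambda_op G C a c"
    have tI: "t \<in> I" unfolding t_def by (rule t_I[OF a(1) cd(1)])
    have tG: "t \<in> carrier G" using tI IG by blast
    have ct: "c \<otimes>\<^bsub>G\<^esub> t = brace_lambda_op G C a c"
      unfolding t_def using Gcan[OF cd(1) lop_closed[OF aG cd(1)]] by simp
    define s where "s = inv\<^bsub>C\<^esub> d \<otimes>\<^bsub>C\<^esub> a \<otimes>\<^bsub>C\<^esub> d"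
    have sI: "s \<in> I" unfolding s_def using normal.inv_op_closed1[OF nC _ a(1)] cd(2) cCG by simp
    have sG: "s \<in> carrier G" using sI IG by blast
    have ds: "d \<otimes>\<^bsub>C\<^esub> s = a \<otimes>\<^bsub>C\<^esub> d"
      unfolding s_def using Ca[OF Ci[OF cd(2)] aG cd(2)] Ccan[OF cd(2) Cm[OF aG cd(2)]] by simp
    let ?y = "\<beta> (brace_lambda_op G C d' t)"
    let ?z = "\<rho> s"
    have yO: "?y \<in> Ops" unfolding Ops_def using lop_I[OF d'G tI] by blast
    have zO: "?z \<in> Ops" unfolding Ops_def using sI by blast
    have "x \<circ> f = f \<circ> ?y \<circ> ?z"
    proof
      fix w
      have "(x \<circ> f) w = \<beta> (brace_lambda_op G C a c) (\<rho> a (\<rho> d w))" using a cd comm[OF aG cd(1)] by simp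
      also have "\<dots> = \<beta> (c \<otimes>\<^bsub>G\<^esub> t) (\<rho> (a \<otimes>\<^bsub>C\<^esub> d) w)" using ct r_mult[OF aG cd(2)] by simp
      also have "\<dots> = \<beta> c (\<beta> t (\<rho> d (\<rho> s w)))"
        using ds[symmetric] r_mult[OF cd(2) sG] b_mult[OF cd(1) tG] by simp
      also have "\<dots> = \<beta> c (\<rho> d (?y (\<rho> s w)))" using comm2[OF cd(2) tG] d'_def by simp
      also have "\<dots> = (f \<circ> ?y \<circ> ?z) w" using cd(3) by simp
      finally show "(x \<circ> f) w = (f \<circ> ?y \<circ> ?z) w" .
    qed
    then show ?thesis using yO zO by blast
  qed
qed

sublocale V: vector_space scale by (rule vs)

lemma lin_iff': "Vector_Spaces.linear scale scale f \<Longrightarrow> f (x + y) = f x + f y \<and> f (scale c x) = scale c (f x)"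
  unfolding Vector_Spaces.linear_iff by blast

lemma phi_lin': "f \<in> Phi \<Longrightarrow> Vector_Spaces.linear scale scale f"
proof -
  assume f: "f \<in> Phi"
  obtain a b where ab: "a \<in> carrier G" "b \<in> carrier G" "f = \<beta> a \<circ> \<rho> b" using f by (rule PhiE)
  show ?thesis using Vector_Spaces.linear_compose[OF lin_r[OF ab(2)] lin_b[OF ab(1)]] ab(3) by simp
qed

lemma ops_lin': "x \<in> Ops \<Longrightarrow> Vector_Spaces.linear scale scale x"
  unfolding Ops_def using lin_b lin_r IG by blast

lemma phi_fin': "finite Phi" unfolding Phi_def using fin by simp

lemma phi_id': "id \<in> Phi" using PhiI[OF Gone Cone] b_one r_one by simp

lemma b_Phi: "a \<in> carrier G \<Longrightarrow> \<beta> a \<in> Phi" using PhiI[OF _ Cone, of a] r_one by simp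
lemma r_Phi: "a \<in> carrier G \<Longrightarrow> \<rho> a \<in> Phi" using PhiI[OF Gone, of a] b_one by simp

lemma irrV': "V.subspace W \<Longrightarrow> (\<forall>f\<in>Phi. f ` W \<subseteq> W) \<Longrightarrow> W = {0} \<or> W = UNIV"
proof -
  assume W: "V.subspace W" and inv: "\<forall>f\<in>Phi. f ` W \<subseteq> W"
  have "inv_subspace scale (carrier G) \<beta> \<rho> W"
    unfolding inv_subspace_def using W inv b_Phi r_Phi by blast
  then show ?thesis using irrA unfolding irred_sub_def by blast
qed

lemma nontriv': "UNIV \<noteq> {0::'v}" using irrA unfolding irred_sub_def by blast

lemma basis_ex: "\<exists>B. finite B \<and> V.independent B \<and> V.span B = UNIV"
proof -
  obtain v :: 'v where v: "v \<noteq> 0" using nontriv' by blast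
  define X where "X = (\<lambda>f. f v) ` Phi"
  have finX: "finite X" unfolding X_def using phi_fin' by simp
  have inv: "\<forall>g\<in>Phi. g ` V.span X \<subseteq> V.span X"
  proof (intro ballI subsetI)
    fix g y assume g: "g \<in> Phi" and "y \<in> g ` V.span X"
    then obtain z where z: "z \<in> V.span X" "y = g z" by blast
    have gl: "\<And>x y c. g (x + y) = g x + g y \<and> g (scale c x) = scale c (g x)"
      using lin_iff'[OF phi_lin'[OF g]] by blast
    have "V.subspace {z. g z \<in> V.span X}"
      unfolding V.subspace_def
    proof (intro conjI ballI allI)
      have "g 0 = g 0 + g 0" using gl[of 0 0] by simp
      then have "g 0 = 0" by simp
      then show "0 \<in> {z. g z \<in> V.span X}" by (simp add: V.span_zero)
    next
      fix x y assume "x \<in> {z. g z \<in> V.span X}" "y \<in> {z. g z \<in> V.span X}"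
      then show "x + y \<in> {z. g z \<in> V.span X}" using gl by (simp add: V.span_add)
    next
      fix c x assume "x \<in> {z. g z \<in> V.span X}"
      then show "scale c x \<in> {z. g z \<in> V.span X}" using gl by (simp add: V.span_scale)
    qed
    moreover have "\<And>x. x \<in> X \<Longrightarrow> g x \<in> V.span X"
    proof -
      fix x assume "x \<in> X"
      then obtain f where f: "f \<in> Phi" "x = f v" unfolding X_def by blast
      have "g x = (g \<circ> f) v" using f by simp
      moreover have "g \<circ> f \<in> Phi" using phi_comp'[OF g f(1)] .
      ultimately have "g x \<in> X" unfolding X_def by blast
      then show "g x \<in> V.span X" by (rule V.span_base)
    qed
    ultimately have "g z \<in> V.span X" using V.span_induct[OF z(1), of "\<lambda>z. g z \<in> V.span X"] by blast
    then show "y \<in> V.span X" using z by simp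
  qed
  have "V.span X = {0} \<or> V.span X = UNIV" by (rule irrV'[OF V.subspace_span inv])
  moreover have "v \<in> V.span X"
  proof -
    have "v = id v" by simp
    then have "v \<in> X" unfolding X_def using phi_id' by blast
    then show ?thesis by (rule V.span_base)
  qed
  ultimately have sX: "V.span X = UNIV" using v by blast
  obtain B where B: "B \<subseteq> X" "V.independent B" "X \<subseteq> V.span B"
    using V.maximal_independent_subset[of X] by blast
  have "V.span X \<subseteq> V.span B" using B(3) V.span_minimal V.subspace_span by blast
  then have "V.span B = UNIV" using sX by blast
  moreover have "finite B" using B(1) finX finite_subset by blast
  ultimately show ?thesis using B(2) by blast
qed

lemma final:
  shows "completely_reducible scale I \<beta> \<rho>
    \<and> (\<forall>g\<in>carrier G \<times> carrier G. \<forall>S. irred_sub scale I \<beta> \<rho> S \<longrightarrow>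
         (\<exists>S'. irred_sub scale I \<beta> \<rho> S' \<and>
               rep_phi \<beta> \<rho> g ` homog_comp scale I \<beta> \<rho> S = homog_comp scale I \<beta> \<rho> S'))
    \<and> (\<forall>S S'. irred_sub scale I \<beta> \<rho> S \<and> irred_sub scale I \<beta> \<rho> S' \<longrightarrow>
         (\<exists>g\<in>carrier G \<times> carrier G.
               rep_phi \<beta> \<rho> g ` homog_comp scale I \<beta> \<rho> S = homog_comp scale I \<beta> \<rho> S'))
    \<and> (\<exists>m. \<forall>S. irred_sub scale I \<beta> \<rho> S \<longrightarrow>
         (\<exists>U. (\<forall>j<m. irred_sub scale I \<beta> \<rho> (U j) \<and> equiv_sub scale I \<beta> \<rho> (U j) S) \<and>
              direct_sum scale U m (homog_comp scale I \<beta> \<rho> S)))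
    \<and> (\<forall>S S'. irred_sub scale I \<beta> \<rho> S \<and> irred_sub scale I \<beta> \<rho> S' \<longrightarrow>
         vector_space.dim scale S = vector_space.dim scale S')"
proof -
  obtain B where B: "finite B" "V.independent B" "V.span B = UNIV" using basis_ex by blast
  have fd: "finite_dimensional_vector_space scale B"
    unfolding finite_dimensional_vector_space_def finite_dimensional_vector_space_axioms_def
    using vs B by blast
  interpret CL: cl scale B Ops Phi
    by (rule cl.intro[OF fd cl_axioms.intro[OF ops_lin' phi_lin' phi_fin' phi_id' phi_comp' phi_inv' conj' irrV' nontriv']])
  have inv_eq: "CL.invs W = inv_subspace scale I \<beta> \<rho> W" for W
    unfolding CL.invs_def unfolding inv_subspace_def Ops_def by blast
  have irr_eq: "CL.irr W = irred_sub scale I \<beta> \<rho> W" for W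
    unfolding CL.irr_def irred_sub_def inv_eq by (rule refl)
  have irr_eq': "CL.irr = irred_sub scale I \<beta> \<rho>" using irr_eq by blast
  have opsT: "(\<forall>x\<in>\<beta> ` I \<union> \<rho> ` I. \<forall>w\<in>W1. T (x w) = x (T w)) =
      (\<forall>a\<in>I. \<forall>w\<in>W1. T (\<beta> a w) = \<beta> a (T w) \<and> T (\<rho> a w) = \<rho> a (T w))" for T :: "'v \<Rightarrow> 'v" and W1
    by blast
  have equ_eq: "CL.equ W S = equiv_sub scale I \<beta> \<rho> W S" for W S
    unfolding CL.equ_def unfolding equiv_sub_def Ops_def opsT by (rule refl)
  have equ_eq': "CL.equ = equiv_sub scale I \<beta> \<rho>" using equ_eq by blast
  have homog_eq: "CL.homog S = homog_comp scale I \<beta> \<rho> S" for S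
    unfolding CL.homog_def homog_comp_def irr_eq' equ_eq' by (rule refl)
  note M = CL.main_locale[unfolded irr_eq' equ_eq']
  note M1 = conjunct1[OF M] and M2 = conjunct1[OF conjunct2[OF M]]
    and M3 = conjunct1[OF conjunct2[OF conjunct2[OF M]]] and M4 = conjunct2[OF conjunct2[OF conjunct2[OF M]]]
  have rpP: "\<And>g. g \<in> carrier G \<times> carrier G \<Longrightarrow> rep_phi \<beta> \<rho> g \<in> Phi" unfolding Phi_def by blast
  show ?thesis
  proof (intro conjI)
    show "completely_reducible scale I \<beta> \<rho>"
      unfolding completely_reducible_def by (rule M1)
  next
    show "\<forall>g\<in>carrier G \<times> carrier G. \<forall>S. irred_sub scale I \<beta> \<rho> S \<longrightarrow>
         (\<exists>S'. irred_sub scale I \<beta> \<rho> S' \<and>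
               rep_phi \<beta> \<rho> g ` homog_comp scale I \<beta> \<rho> S = homog_comp scale I \<beta> \<rho> S')"
    proof (intro ballI allI impI)
      fix g S assume g: "g \<in> carrier G \<times> carrier G" and S: "irred_sub scale I \<beta> \<rho> S"
      have Si: "CL.irr S" using S irr_eq by simp
      have "CL.irr (rep_phi \<beta> \<rho> g ` S)" by (rule CL.phi_irr[OF rpP[OF g] Si])
      moreover have "rep_phi \<beta> \<rho> g ` CL.homog S = CL.homog (rep_phi \<beta> \<rho> g ` S)"
        by (rule CL.homog_image[OF rpP[OF g] Si])
      ultimately show "\<exists>S'. irred_sub scale I \<beta> \<rho> S' \<and>
               rep_phi \<beta> \<rho> g ` homog_comp scale I \<beta> \<rho> S = homog_comp scale I \<beta> \<rho> S'"
        unfolding homog_eq irr_eq by blast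
    qed
  next
    show "\<forall>S S'. irred_sub scale I \<beta> \<rho> S \<and> irred_sub scale I \<beta> \<rho> S' \<longrightarrow>
         (\<exists>g\<in>carrier G \<times> carrier G.
               rep_phi \<beta> \<rho> g ` homog_comp scale I \<beta> \<rho> S = homog_comp scale I \<beta> \<rho> S')"
    proof (intro allI impI)
      fix S S' assume SS: "irred_sub scale I \<beta> \<rho> S \<and> irred_sub scale I \<beta> \<rho> S'"
      then obtain f where f: "f \<in> Phi" "f ` CL.homog S = CL.homog S'" using M2 by blast
      then obtain g where "g \<in> carrier G \<times> carrier G" "f = rep_phi \<beta> \<rho> g" unfolding Phi_def by blast
      then show "\<exists>g\<in>carrier G \<times> carrier G.
               rep_phi \<beta> \<rho> g ` homog_comp scale I \<beta> \<rho> S = homog_comp scale I \<beta> \<rho> S'"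
        using f(2) unfolding homog_eq by blast
    qed
  next
    show "\<exists>m. \<forall>S. irred_sub scale I \<beta> \<rho> S \<longrightarrow>
         (\<exists>U. (\<forall>j<m. irred_sub scale I \<beta> \<rho> (U j) \<and> equiv_sub scale I \<beta> \<rho> (U j) S) \<and>
              direct_sum scale U m (homog_comp scale I \<beta> \<rho> S))"
      using M3 unfolding homog_eq .
  next
    show "\<forall>S S'. irred_sub scale I \<beta> \<rho> S \<and> irred_sub scale I \<beta> \<rho> S' \<longrightarrow>
         vector_space.dim scale S = vector_space.dim scale S'"
      by (rule M4)
  qed
qed

end

theorem theorem3p4:
  fixes G C :: "'a monoid" and I :: "'a set"
    and scale :: "'k::field \<Rightarrow> 'v::ab_group_add \<Rightarrow> 'v"
    and \<beta> \<rho> :: "'a \<Rightarrow> 'v \<Rightarrow> 'v"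
  assumes "skew_brace G C" and "finite (carrier G)"
    and "vector_space scale"
    and "brace_ideal G C I"
    and "brace_rep G C scale \<beta> \<rho>"
    and "irred_sub scale (carrier G) \<beta> \<rho> UNIV"
  shows "completely_reducible scale I \<beta> \<rho>
    \<and> (\<forall>g\<in>carrier G \<times> carrier G. \<forall>S. irred_sub scale I \<beta> \<rho> S \<longrightarrow>
         (\<exists>S'. irred_sub scale I \<beta> \<rho> S' \<and>
               rep_phi \<beta> \<rho> g ` homog_comp scale I \<beta> \<rho> S = homog_comp scale I \<beta> \<rho> S'))
    \<and> (\<forall>S S'. irred_sub scale I \<beta> \<rho> S \<and> irred_sub scale I \<beta> \<rho> S' \<longrightarrow>
         (\<exists>g\<in>carrier G \<times> carrier G.
               rep_phi \<beta> \<rho> g ` homog_comp scale I \<beta> \<rho> S = homog_comp scale I \<beta> \<rho> S'))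
    \<and> (\<exists>m. \<forall>S. irred_sub scale I \<beta> \<rho> S \<longrightarrow>
         (\<exists>U. (\<forall>j<m. irred_sub scale I \<beta> \<rho> (U j) \<and> equiv_sub scale I \<beta> \<rho> (U j) S) \<and>
              direct_sum scale U m (homog_comp scale I \<beta> \<rho> S)))
    \<and> (\<forall>S S'. irred_sub scale I \<beta> \<rho> S \<and> irred_sub scale I \<beta> \<rho> S' \<longrightarrow>
         vector_space.dim scale S = vector_space.dim scale S')"
proof -
  have "bs G C I scale \<beta> \<rho>" using assms unfolding bs_def by blast
  then show ?thesis by (rule bs.final)
qed

end
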